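(* Let $M$ be a closed oriented surface of genus $g\ge1$, $n\ge 2$, and use the notation of the context. Let $\iota:K_{n-1}(M)\to K_n(M)$ be any homomorphism with $\rho\circ\iota=\mathrm{id}$ (such a section exists). Let $j\in\{2,\dots,n\}$ and $u\in\mathcal{B}_{1\,j}$. Then for every $\beta\in K_{n-1}(M)$ there exists $\omega\in F_n(M)$ such that $\iota(\beta)\,u\,\iota(\beta)^{-1}=\omega u\omega^{-1}$; that is, the conjugacy class of $u$ in $F_n(M)$ is invariant under the action of $K_{n-1}(M)$ on $F_n(M)$ by conjugation through $\iota$.
   Context: Fix distinct points $P_1,\dots,P_n$ of $M$. $B_n(M)$ is the braid group of $M$ on $n$ strings based at $\{P_1,\dots,P_n\}$ (isotopy classes of $n$-tuples of disjoint paths $b_i$ in $M\times[0,1]$, monotone in the $[0,1]$-coordinate, from $(P_i,0)$ to $(P_{\zeta(i)},1)$ for a permutation $\zeta$; product by concatenation). Represent $M$ as a $4g$-gon with sides identified along the word $x_1\cdots x_{2g}x_1^{-1}\cdots x_{2g}^{-1}$, so $\pi_1(M)=\langle x_1,\dots,x_{2g}\mid x_1x_2\cdots x_{2g}=x_{2g}\cdots x_2x_1\rangle$. $B_n(M)$ is generated by $\sigma_1,\dots,\sigma_{n-1}$ (the standard half-twist exchanging strings $i,i+1$) and $a_1,\dots,a_{2g}$ (the braid whose first string travels once along the loop $x_k$, the other strings being constant), subject to the relations: $\sigma_i\sigma_j=\sigma_j\sigma_i$ ($|i-j|\ge2$); $\sigma_i\sigma_{i+1}\sigma_i=\sigma_{i+1}\sigma_i\sigma_{i+1}$;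 $a_1\cdots a_{2g}a_1^{-1}\cdots a_{2g}^{-1}=\sigma_1\cdots\sigma_{n-2}\sigma_{n-1}^2\sigma_{n-2}\cdots\sigma_1$; $a_rA_{2\,s}=A_{2\,s}a_r$ ($r\ne s$); $(a_1\cdots a_r)A_{2\,r}=\sigma_1^2A_{2\,r}(a_1\cdots a_r)$; $a_r\sigma_i=\sigma_ia_r$ ($i\ge2$), where $A_{2\,r}=\sigma_1^{-1}(a_1\cdots a_{r-1}a_{r+1}^{-1}\cdots a_{2g}^{-1})\sigma_1^{-1}$. $PB_n(M)$ is the kernel of the homomorphism $B_n(M)\to\mathrm{Sym}_n$, $\sigma_i\mapsto(i,i+1)$, $a_k\mapsto1$. Put $T_{i\,j}=\sigma_i\cdots\sigma_{j-2}\sigma_{j-1}^2\sigma_{j-2}^{-1}\cdots\sigma_i^{-1}$ for $i<j$, and $a_{i\,k}=\sigma_{i-1}^{-1}\cdots\sigma_1^{-1}a_k\sigma_1^{-1}\cdots\sigma_{i-1}^{-1}$ if $k$ is odd, $a_{i\,k}=\sigma_{i-1}\cdots\sigma_1a_k\sigma_1\cdots\sigma_{i-1}$ if $k$ is even (so $a_{1\,k}=a_k$). Let $\phi:PB_n(M)\to\pi_1(M)^n$ send a pure braid to the tuple of classes of the projections to $M$ of its strings, and $K_n(M)=\ker\phi$. Let $\rho:PB_n(M)\to PB_{n-1}(M)$ forget the first string; it maps $K_n(M)$ onto $K_{n-1}(M)$. Let $F_n(M)=K_n(M)\cap\ker\rho$. For each $\gamma\in\pi_1(M)$ choose a word $\tilde\gamma$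 in $x_1^{\pm1},\dots,x_{2g}^{\pm1}$ representing $\gamma$, such that the set of chosen words is prefix-closed; $\tilde\gamma_{(1)}$ denotes the element of $B_n(M)$ obtained by replacing each $x_k^{\pm1}$ by $a_{1\,k}^{\pm1}$. Set $\mathcal{B}_{1\,j}=\{\tilde\gamma_{(1)}T_{1\,j}\tilde\gamma_{(1)}^{-1}:\gamma\in\pi_1(M)\}$; $F_n(M)$ is free with free basis $\bigsqcup_{j=2}^n\mathcal{B}_{1\,j}$. *)

theory Defs
  imports "HOL-Algebra.Group" "HOL-Combinatorics.Transposition"
begin

text \<open>A word is a list of letters; (True, x) stands for x, (False, x) for x inverse.\<close>
type_synonym 'a word = "(bool \<times> 'a) list"

definition inv_word :: "'a word \<Rightarrow> 'a word" where
  "inv_word w = rev (map (\<lambda>(b, x). (\<not> b, x)) w)"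

inductive pres_eq :: "('a word \<times> 'a word) set \<Rightarrow> 'a word \<Rightarrow> 'a word \<Rightarrow> bool"
  for R :: "('a word \<times> 'a word) set" where
  refl: "pres_eq R w w"
| sym: "pres_eq R v w \<Longrightarrow> pres_eq R w v"
| trans: "pres_eq R u v \<Longrightarrow> pres_eq R v w \<Longrightarrow> pres_eq R u w"
| cancel: "pres_eq R (u @ [(b, x), (\<not> b, x)] @ v) (u @ v)"
| rel: "(l, r) \<in> R \<Longrightarrow> pres_eq R (u @ l @ v) (u @ r @ v)"

definition pclass :: "('a word \<times> 'a word) set \<Rightarrow> 'a word \<Rightarrow> 'a word set" where
  "pclass R w = {v. pres_eq R w v}"

definition pres_group :: "'a set \<Rightarrow> ('a word \<times> 'a word) set \<Rightarrow> 'a word set monoid" where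
  "pres_group S R =
     \<lparr>carrier = pclass R ` lists (UNIV \<times> S),
      mult = (\<lambda>A B. {w. \<exists>u\<in>A. \<exists>v\<in>B. pres_eq R (u @ v) w}),
      one = pclass R []\<rparr>"

definition prodw :: "('b \<Rightarrow> 'a word) \<Rightarrow> 'b list \<Rightarrow> 'a word" where
  "prodw f xs = concat (map f xs)"

definition pi_rels :: "nat \<Rightarrow> (nat word \<times> nat word) set" where
  "pi_rels g = {(prodw (\<lambda>k. [(True, k)]) [1..<2*g+1],
                 prodw (\<lambda>k. [(True, k)]) (rev [1..<2*g+1]))}"

definition pi1 :: "nat \<Rightarrow> nat word set monoid" where
  "pi1 g = pres_group {1..2*g} (pi_rels g)"

datatype bgen = Sg nat | Ag nat

definition sw :: "nat \<Rightarrow> bgen word" where "sw i = [(True, Sg i)]"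
definition swi :: "nat \<Rightarrow> bgen word" where "swi i = [(False, Sg i)]"
definition aw :: "nat \<Rightarrow> bgen word" where "aw k = [(True, Ag k)]"
definition awi :: "nat \<Rightarrow> bgen word" where "awi k = [(False, Ag k)]"

definition braid_gens :: "nat \<Rightarrow> nat \<Rightarrow> bgen set" where
  "braid_gens g n = {Sg i | i. 1 \<le> i \<and> i \<le> n - 1} \<union> {Ag k | k. 1 \<le> k \<and> k \<le> 2*g}"

definition surf_rhs :: "nat \<Rightarrow> bgen word" where
  "surf_rhs n = (if 2 \<le> n then prodw sw [1..<n-1] @ sw (n-1) @ sw (n-1) @ prodw sw (rev [1..<n-1])
                 else [])"

definition A2w :: "nat \<Rightarrow> nat \<Rightarrow> bgen word" where
  "A2w g r = swi 1 @ prodw aw [1..<r] @ prodw awi [r+1..<2*g+1] @ swi 1"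

definition braid_rels :: "nat \<Rightarrow> nat \<Rightarrow> (bgen word \<times> bgen word) set" where
  "braid_rels g n =
     {(sw i @ sw j, sw j @ sw i) | i j. 1 \<le> i \<and> i \<le> n - 1 \<and> 1 \<le> j \<and> j \<le> n - 1 \<and> (i + 2 \<le> j \<or> j + 2 \<le> i)}
   \<union> {(sw i @ sw (i+1) @ sw i, sw (i+1) @ sw i @ sw (i+1)) | i. 1 \<le> i \<and> i + 1 \<le> n - 1}
   \<union> {(prodw aw [1..<2*g+1] @ prodw awi [1..<2*g+1], surf_rhs n)}
   \<union> {(aw r @ A2w g s, A2w g s @ aw r) | r s. 2 \<le> n \<and> r \<in> {1..2*g} \<and> s \<in> {1..2*g} \<and> r \<noteq> s}
   \<union> {(prodw aw [1..<r+1] @ A2w g r, sw 1 @ sw 1 @ A2w g r @ prodw aw [1..<r+1]) | r. 2 \<le> n \<and> r \<in> {1..2*g}}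
   \<union> {(aw r @ sw i, sw i @ aw r) | r i. r \<in> {1..2*g} \<and> 2 \<le> i \<and> i \<le> n - 1}"

definition Bgrp :: "nat \<Rightarrow> nat \<Rightarrow> bgen word set monoid" where
  "Bgrp g n = pres_group (braid_gens g n) (braid_rels g n)"

definition bwords :: "nat \<Rightarrow> nat \<Rightarrow> bgen word set" where
  "bwords g n = lists (UNIV \<times> braid_gens g n)"

fun perm_word :: "bgen word \<Rightarrow> nat \<Rightarrow> nat" where
  "perm_word [] = id"
| "perm_word ((b, Sg i) # w) = Transposition.transpose i (i+1) \<circ> perm_word w"
| "perm_word ((b, Ag k) # w) = perm_word w"

definition PB :: "nat \<Rightarrow> nat \<Rightarrow> bgen word set set" where
  "PB g n = {pclass (braid_rels g n) w | w. w \<in> bwords g n \<and> perm_word w = id}"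

text \<open>Projection to M of the string starting at position p, as a word in x_k:
  crossings project to the fixed arcs between base points (trivial after identification),
  a_k contributes x_k exactly when the followed string is in position 1.\<close>
fun strand :: "nat \<Rightarrow> bgen word \<Rightarrow> nat word" where
  "strand p [] = []"
| "strand p ((b, Sg i) # w) = strand (if p = i then i + 1 else if p = i + 1 then i else p) w"
| "strand p ((b, Ag k) # w) = (if p = 1 then [(b, k)] else []) @ strand p w"

definition phi :: "nat \<Rightarrow> nat \<Rightarrow> bgen word set \<Rightarrow> nat \<Rightarrow> nat word set" where
  "phi g n c = (\<lambda>s\<in>{1..n}. pclass (pi_rels g) (strand s (SOME w. w \<in> c \<inter> bwords g n)))"

definition K :: "nat \<Rightarrow> nat \<Rightarrow> bgen word set set" where
  "K g n = {c \<in> PB g n. \<forall>s\<in>{1..n}. phi g n c s = \<one>\<^bsub>pi1 g\<^esub>}"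

fun forget :: "nat \<Rightarrow> bgen word \<Rightarrow> bgen word" where
  "forget p [] = []"
| "forget p ((b, Sg i) # w) =
     (if p = i then forget (i + 1) w
      else if p = i + 1 then forget i w
      else (b, Sg (if i < p then i else i - 1)) # forget p w)"
| "forget p ((b, Ag k) # w) = (if p = 1 then forget p w else (b, Ag k) # forget p w)"

definition rho :: "nat \<Rightarrow> nat \<Rightarrow> bgen word set \<Rightarrow> bgen word set" where
  "rho g n c = pclass (braid_rels g (n - 1)) (forget 1 (SOME w. w \<in> c \<inter> bwords g n))"

definition F :: "nat \<Rightarrow> nat \<Rightarrow> bgen word set set" where
  "F g n = {c \<in> K g n. rho g n c = \<one>\<^bsub>Bgrp g (n - 1)\<^esub>}"

definition Kgrp :: "nat \<Rightarrow> nat \<Rightarrow> bgen word set monoid" where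
  "Kgrp g n = (Bgrp g n)\<lparr>carrier := K g n\<rparr>"

definition Tw :: "nat \<Rightarrow> nat \<Rightarrow> bgen word" where
  "Tw i j = prodw sw [i..<j-1] @ sw (j-1) @ sw (j-1) @ prodw swi (rev [i..<j-1])"

text \<open>gamma tilde_(1): replace x_k^{+-1} by a_{1 k}^{+-1} = a_k^{+-1}.\<close>
definition lift1 :: "nat word \<Rightarrow> bgen word" where
  "lift1 v = map (\<lambda>(b, k). (b, Ag k)) v"

text \<open>A prefix-closed choice of representative words for the elements of pi_1(M).\<close>
definition transversal :: "nat \<Rightarrow> (nat word set \<Rightarrow> nat word) \<Rightarrow> bool" where
  "transversal g ch \<longleftrightarrow>
     (\<forall>\<gamma>\<in>carrier (pi1 g). ch \<gamma> \<in> lists (UNIV \<times> {1..2*g}) \<and> pclass (pi_rels g) (ch \<gamma>) = \<gamma>)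
   \<and> (\<forall>\<gamma>\<in>carrier (pi1 g). \<forall>m. \<exists>\<delta>\<in>carrier (pi1 g). ch \<delta> = take m (ch \<gamma>))"

definition Bset :: "nat \<Rightarrow> nat \<Rightarrow> (nat word set \<Rightarrow> nat word) \<Rightarrow> nat \<Rightarrow> bgen word set set" where
  "Bset g n ch j = {pclass (braid_rels g n) (lift1 (ch \<gamma>) @ Tw 1 j @ inv_word (lift1 (ch \<gamma>)))
                    | \<gamma>. \<gamma> \<in> carrier (pi1 g)}"

end

theory Submission
  imports Defs
begin


section \<open>Generic presentations\<close>

lemma pe_ctx: "pres_eq R a b \<Longrightarrow> pres_eq R (p @ a @ q) (p @ b @ q)"
proof (induction rule: pres_eq.induct)
  case (refl w) then show ?case by (rule pres_eq.refl)
next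
  case (sym v w) then show ?case by (metis pres_eq.sym)
next
  case (trans a b c) then show ?case by (metis pres_eq.trans)
next
  case (cancel u' b x v')
  have "pres_eq R ((p @ u') @ [(b, x), (\<not> b, x)] @ (v' @ q)) ((p @ u') @ (v' @ q))"
    by (rule pres_eq.cancel)
  then show ?case by simp
next
  case (rel l r u' v')
  have "pres_eq R ((p @ u') @ l @ (v' @ q)) ((p @ u') @ r @ (v' @ q))"
    by (rule pres_eq.rel[OF rel])
  then show ?case by simp
qed

lemma pe_app: "pres_eq R a b \<Longrightarrow> pres_eq R c d \<Longrightarrow> pres_eq R (a @ c) (b @ d)"
  using pe_ctx[of R a b "[]" c] pe_ctx[of R c d b "[]"] by (auto intro: pres_eq.trans)

lemma pe_rel: "(l, r) \<in> R \<Longrightarrow> pres_eq R l r"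
  using pres_eq.rel[of l r R "[]" "[]"] by simp

lemma pe_cancel1: "pres_eq R ([(b, x), (\<not> b, x)]) []"
  using pres_eq.cancel[of R "[]" b x "[]"] by simp

lemma inv_word_Nil[simp]: "inv_word [] = []"
  by (simp add: inv_word_def)
lemma inv_word_Cons[simp]: "inv_word (x # w) = inv_word w @ [(\<not> fst x, snd x)]"
  by (cases x) (simp add: inv_word_def)
lemma inv_word_append[simp]: "inv_word (a @ b) = inv_word b @ inv_word a"
  by (simp add: inv_word_def)
lemma inv_word_inv_word[simp]: "inv_word (inv_word a) = a"
  by (induction a) auto
lemma inv_word_lists: "a \<in> lists (UNIV \<times> S) \<Longrightarrow> inv_word a \<in> lists (UNIV \<times> S)"
  by (induction a) auto

lemma pe_inv_r: "pres_eq R (a @ inv_word a) []"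
proof (induction a)
  case Nil then show ?case by (simp add: pres_eq.refl)
next
  case (Cons x a)
  obtain b y where x: "x = (b, y)" by (cases x)
  have "pres_eq R ([x] @ (a @ inv_word a) @ [(\<not> b, y)]) ([x] @ [] @ [(\<not> b, y)])"
    by (rule pe_ctx[OF Cons])
  moreover have "pres_eq R [(b, y), (\<not> b, y)] []" by (rule pe_cancel1)
  ultimately show ?case using x by (auto intro: pres_eq.trans)
qed

lemma pe_inv_l: "pres_eq R (inv_word a @ a) []"
  using pe_inv_r[of R "inv_word a"] by simp

lemma pclass_eq_iff: "pclass R a = pclass R b \<longleftrightarrow> pres_eq R a b"
proof
  assume "pclass R a = pclass R b"
  then have "b \<in> pclass R a" by (simp add: pclass_def pres_eq.refl)
  then show "pres_eq R a b" by (simp add: pclass_def)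
next
  assume h: "pres_eq R a b"
  show "pclass R a = pclass R b"
    unfolding pclass_def using h by (auto intro: pres_eq.trans pres_eq.sym)
qed

lemma pclass_mem: "w \<in> pclass R a \<longleftrightarrow> pres_eq R a w"
  by (simp add: pclass_def)

lemma pres_mult: "mult (pres_group S R) (pclass R a) (pclass R b) = pclass R (a @ b)"
  unfolding pres_group_def pclass_def
  by (auto intro: pres_eq.trans pres_eq.sym pe_app pres_eq.refl)

lemma pres_one: "one (pres_group S R) = pclass R []"
  by (simp add: pres_group_def)

lemma pres_carrier: "carrier (pres_group S R) = pclass R ` lists (UNIV \<times> S)"
  by (simp add: pres_group_def)

lemma pres_group_is_group: "group (pres_group S R)"
proof (rule groupI)
  fix x y assume "x \<in> carrier (pres_group S R)" "y \<in> carrier (pres_group S R)"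
  then obtain a b where "a \<in> lists (UNIV \<times> S)" "b \<in> lists (UNIV \<times> S)" "x = pclass R a" "y = pclass R b"
    by (auto simp: pres_carrier)
  then show "x \<otimes>\<^bsub>pres_group S R\<^esub> y \<in> carrier (pres_group S R)"
    by (auto simp: pres_mult pres_carrier)
next
  show "\<one>\<^bsub>pres_group S R\<^esub> \<in> carrier (pres_group S R)"
    by (auto simp: pres_one pres_carrier intro!: image_eqI[where x="[]"])
next
  fix x y z assume "x \<in> carrier (pres_group S R)" "y \<in> carrier (pres_group S R)" "z \<in> carrier (pres_group S R)"
  then show "x \<otimes>\<^bsub>pres_group S R\<^esub> y \<otimes>\<^bsub>pres_group S R\<^esub> z = x \<otimes>\<^bsub>pres_group S R\<^esub> (y \<otimes>\<^bsub>pres_group S R\<^esub> z)"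
    by (auto simp: pres_mult pres_carrier)
next
  fix x assume "x \<in> carrier (pres_group S R)"
  then show "\<one>\<^bsub>pres_group S R\<^esub> \<otimes>\<^bsub>pres_group S R\<^esub> x = x"
    by (auto simp: pres_mult pres_carrier pres_one)
next
  fix x assume "x \<in> carrier (pres_group S R)"
  then obtain a where a: "a \<in> lists (UNIV \<times> S)" "x = pclass R a" by (auto simp: pres_carrier)
  show "\<exists>y\<in>carrier (pres_group S R). y \<otimes>\<^bsub>pres_group S R\<^esub> x = \<one>\<^bsub>pres_group S R\<^esub>"
  proof (rule bexI[where x="pclass R (inv_word a)"])
    show "pclass R (inv_word a) \<otimes>\<^bsub>pres_group S R\<^esub> x = \<one>\<^bsub>pres_group S R\<^esub>"
      using a by (simp add: pres_mult pres_one pclass_eq_iff pe_inv_l)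
    show "pclass R (inv_word a) \<in> carrier (pres_group S R)"
      using inv_word_lists[OF a(1)] by (simp add: pres_carrier)
  qed
qed

lemma pres_inv: "a \<in> lists (UNIV \<times> S) \<Longrightarrow> inv\<^bsub>pres_group S R\<^esub> (pclass R a) = pclass R (inv_word a)"
  apply (rule group.inv_equality[OF pres_group_is_group])
  using inv_word_lists[of a S]
  by (auto simp: pres_mult pres_carrier pres_one pclass_eq_iff pe_inv_l)


section \<open>Tracking positions\<close>

definition swp :: "nat \<Rightarrow> nat \<Rightarrow> nat" where
  "swp i p = (if p = i then i + 1 else if p = i + 1 then i else p)"

fun trk :: "nat \<Rightarrow> bgen word \<Rightarrow> nat" where
  "trk p [] = p"
| "trk p ((b, Sg i) # w) = trk (swp i p) w"
| "trk p ((b, Ag k) # w) = trk p w"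

lemma swp_swp[simp]: "swp i (swp i p) = p"
  by (simp add: swp_def)

lemma trk_append[simp]: "trk p (x @ y) = trk (trk p x) y"
  by (induction p x rule: trk.induct) auto

lemma forget_append: "forget p (x @ y) = forget p x @ forget (trk p x) y"
  by (induction p x rule: trk.induct) (auto simp: swp_def)

lemma strand_append: "strand p (x @ y) = strand p x @ strand (trk p x) y"
  by (induction p x rule: trk.induct) (auto simp: swp_def)

lemma perm_word_append: "perm_word (x @ y) = perm_word x \<circ> perm_word y"
  by (induction x rule: perm_word.induct) auto

lemma perm_word_trk: "perm_word w (trk p w) = p"
  by (induction p w rule: trk.induct) (auto simp: swp_def Transposition.transpose_def)

lemma trk_perm_word: "trk (perm_word w p) w = p"
proof (induction w arbitrary: p rule: perm_word.induct)
  case 1 then show ?case by simp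
next
  case (2 b i w)
  have "\<And>q. swp i (Transposition.transpose i (i + 1) q) = q"
    by (simp add: swp_def Transposition.transpose_def)
  then show ?case using 2 by simp
next
  case (3 b k w) then show ?case by simp
qed

lemma pure_iff: "perm_word w = id \<longleftrightarrow> (\<forall>p. trk p w = p)"
proof
  assume "perm_word w = id" then show "\<forall>p. trk p w = p" using trk_perm_word[of w] by simp
next
  assume "\<forall>p. trk p w = p" then show "perm_word w = id"
    using perm_word_trk[of w] by (auto simp: fun_eq_iff)
qed

lemma trk_inv: "trk (trk p w) (inv_word w) = p"
  by (induction p w rule: trk.induct) auto

lemma forget_inv: "forget (trk p w) (inv_word w) = inv_word (forget p w)"
proof (induction p w rule: trk.induct)
  case (1 p) then show ?case by simp
next
  case (2 p b i w)
  then show ?case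
    by (auto simp: forget_append trk_inv swp_def)
next
  case (3 p b k w)
  then show ?case by (auto simp: forget_append trk_inv)
qed

lemma strand_inv: "strand (trk p w) (inv_word w) = inv_word (strand p w)"
proof (induction p w rule: trk.induct)
  case (1 p) then show ?case by simp
next
  case (2 p b i w)
  then show ?case by (auto simp: strand_append trk_inv swp_def)
next
  case (3 p b k w)
  then show ?case by (auto simp: strand_append trk_inv)
qed

lemma pure_inv: "perm_word w = id \<Longrightarrow> perm_word (inv_word w) = id"
  unfolding pure_iff using trk_inv by metis

lemma pure_append: "perm_word x = id \<Longrightarrow> perm_word y = id \<Longrightarrow> perm_word (x @ y) = id"
  by (simp add: perm_word_append)

lemma pure_conj: "perm_word y = id \<Longrightarrow> perm_word (x @ y @ inv_word x) = id"
  unfolding pure_iff by (simp add: trk_inv)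

lemma braid_gens_Sg[simp]: "Sg i \<in> braid_gens g n \<longleftrightarrow> 1 \<le> i \<and> i \<le> n - 1"
  by (auto simp: braid_gens_def)
lemma braid_gens_Ag[simp]: "Ag k \<in> braid_gens g n \<longleftrightarrow> 1 \<le> k \<and> k \<le> 2 * g"
  by (auto simp: braid_gens_def)

lemma trk_range: "w \<in> lists (UNIV \<times> braid_gens g n) \<Longrightarrow> p \<in> {1..n} \<Longrightarrow> trk p w \<in> {1..n}"
proof (induction p w rule: trk.induct)
  case (2 p b i w)
  then show ?case by (auto simp: swp_def)
qed auto

section \<open>Cleaning junk letters\<close>

definition cl :: "'a set \<Rightarrow> 'a word \<Rightarrow> 'a word" where
  "cl S w = filter (\<lambda>x. snd x \<in> S) w"

lemma cl_append[simp]: "cl S (a @ b) = cl S a @ cl S b"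
  by (simp add: cl_def)

lemma cl_valid: "w \<in> lists (UNIV \<times> S) \<Longrightarrow> cl S w = w"
  by (induction w) (auto simp: cl_def)

lemma cl_lists: "cl S w \<in> lists (UNIV \<times> S)"
  by (induction w) (auto simp: cl_def)

lemma cl_pe:
  assumes RS: "\<And>l r. (l, r) \<in> R \<Longrightarrow> l \<in> lists (UNIV \<times> S) \<and> r \<in> lists (UNIV \<times> S)"
  shows "pres_eq R v w \<Longrightarrow> pres_eq R (cl S v) (cl S w)"
proof (induction rule: pres_eq.induct)
  case (refl w) then show ?case by (rule pres_eq.refl)
next
  case (sym v w) then show ?case by (metis pres_eq.sym)
next
  case (trans a b c) then show ?case by (metis pres_eq.trans)
next
  case (cancel u b x v)
  show ?case
  proof (cases "x \<in> S")
    case True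
    then show ?thesis using pres_eq.cancel[of R "cl S u" b x "cl S v"] by (simp add: cl_def)
  next
    case False
    then show ?thesis by (simp add: cl_def pres_eq.refl)
  qed
next
  case (rel l r u v)
  then show ?case using RS[OF rel] pres_eq.rel[OF rel, of "cl S u" "cl S v"] by (simp add: cl_valid)
qed

lemma compat_gen:
  fixes f :: "nat \<Rightarrow> bgen word \<Rightarrow> 'c word"
  assumes app: "\<And>p x y. f p (x @ y) = f p x @ f (trk p x) y"
    and RS: "\<And>l r. (l, r) \<in> R \<Longrightarrow> l \<in> lists (UNIV \<times> S) \<and> r \<in> lists (UNIV \<times> S)"
    and Pcl: "\<And>p w. p \<in> P \<Longrightarrow> w \<in> lists (UNIV \<times> S) \<Longrightarrow> trk p w \<in> P"
    and Rrel: "\<And>l r p. (l, r) \<in> R \<Longrightarrow> p \<in> P \<Longrightarrow> trk p l = trk p r \<and> pres_eq R' (f p l) (f p r)"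
    and Rcan: "\<And>b x p. x \<in> S \<Longrightarrow> p \<in> P \<Longrightarrow> pres_eq R' (f p [(b, x), (\<not> b, x)]) []"
  shows "pres_eq R v w \<Longrightarrow> p \<in> P \<Longrightarrow> pres_eq R' (f p (cl S v)) (f p (cl S w))"
proof (induction arbitrary: p rule: pres_eq.induct)
  case (refl w) then show ?case by (simp add: pres_eq.refl)
next
  case (sym v w) then show ?case by (metis pres_eq.sym)
next
  case (trans a b c) then show ?case by (metis pres_eq.trans)
next
  case (cancel u b x v)
  show ?case
  proof (cases "x \<in> S")
    case True
    let ?q = "trk p (cl S u)"
    have q: "?q \<in> P" using Pcl[OF cancel cl_lists] .
    have t: "trk ?q [(b, x), (\<not> b, x)] = ?q"
      by (cases x) (auto simp: swp_def)
    have c: "cl S (u @ [(b, x), (\<not> b, x)] @ v) = cl S u @ [(b, x), (\<not> b, x)] @ cl S v"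
      using True by (simp add: cl_def)
    have e: "f p (cl S (u @ [(b, x), (\<not> b, x)] @ v)) = f p (cl S u) @ f ?q [(b, x), (\<not> b, x)] @ f ?q (cl S v)"
      unfolding c by (metis app t)
    have "pres_eq R' (f p (cl S u) @ f ?q [(b, x), (\<not> b, x)] @ f ?q (cl S v)) (f p (cl S u) @ [] @ f ?q (cl S v))"
      by (rule pe_ctx[OF Rcan[OF True q]])
    then show ?thesis using e by (simp add: app)
  next
    case False
    then show ?thesis by (simp add: cl_def pres_eq.refl)
  qed
next
  case (rel l r u v)
  let ?q = "trk p (cl S u)"
  have q: "?q \<in> P" using Pcl[OF rel(2) cl_lists] .
  have lr: "l \<in> lists (UNIV \<times> S)" "r \<in> lists (UNIV \<times> S)" using RS[OF rel(1)] by auto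
  have h: "trk ?q l = trk ?q r" "pres_eq R' (f ?q l) (f ?q r)" using Rrel[OF rel(1) q] by auto
  have e1: "f p (cl S (u @ l @ v)) = f p (cl S u) @ f ?q l @ f (trk ?q l) (cl S v)"
    using lr by (simp add: app cl_valid)
  have e2: "f p (cl S (u @ r @ v)) = f p (cl S u) @ f ?q r @ f (trk ?q l) (cl S v)"
    using lr h(1) by (simp add: app cl_valid)
  show ?case unfolding e1 e2 by (rule pe_ctx[OF h(2)])
qed


lemma prodw_Nil[simp]: "prodw f [] = []" by (simp add: prodw_def)
lemma prodw_Cons[simp]: "prodw f (x # xs) = f x @ prodw f xs" by (simp add: prodw_def)
lemma prodw_append[simp]: "prodw f (xs @ ys) = prodw f xs @ prodw f ys" by (simp add: prodw_def)

abbreviation U :: "nat \<Rightarrow> nat \<Rightarrow> bgen word" where "U a b \<equiv> prodw sw [a..<b]"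
abbreviation Dn :: "nat \<Rightarrow> nat \<Rightarrow> bgen word" where "Dn a b \<equiv> prodw sw (rev [a..<b])"

lemma forget_sw[simp]: "forget p (sw i) = (if p = i \<or> p = i + 1 then [] else sw (if i < p then i else i - 1))"
  by (simp add: sw_def)
lemma forget_swi[simp]: "forget p (swi i) = (if p = i \<or> p = i + 1 then [] else swi (if i < p then i else i - 1))"
  by (simp add: swi_def)
lemma forget_aw[simp]: "forget p (aw k) = (if p = 1 then [] else aw k)"
  by (simp add: aw_def)
lemma forget_awi[simp]: "forget p (awi k) = (if p = 1 then [] else awi k)"
  by (simp add: awi_def)
lemma trk_sw[simp]: "trk p (sw i) = swp i p" by (simp add: sw_def)
lemma trk_swi[simp]: "trk p (swi i) = swp i p" by (simp add: swi_def)
lemma trk_aw[simp]: "trk p (aw k) = p" by (simp add: aw_def)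
lemma trk_awi[simp]: "trk p (awi k) = p" by (simp add: awi_def)
lemma strand_sw[simp]: "strand p (sw i) = []" by (simp add: sw_def)
lemma strand_swi[simp]: "strand p (swi i) = []" by (simp add: swi_def)
lemma strand_aw[simp]: "strand p (aw k) = (if p = 1 then [(True, k)] else [])" by (simp add: aw_def)
lemma strand_awi[simp]: "strand p (awi k) = (if p = 1 then [(False, k)] else [])" by (simp add: awi_def)

lemma trk_prodw_aw[simp]: "trk p (prodw aw xs) = p" by (induction xs) auto
lemma trk_prodw_awi[simp]: "trk p (prodw awi xs) = p" by (induction xs) auto
lemma forget_prodw_aw[simp]: "forget p (prodw aw xs) = (if p = 1 then [] else prodw aw xs)"
  by (induction xs) (auto simp: forget_append)
lemma forget_prodw_awi[simp]: "forget p (prodw awi xs) = (if p = 1 then [] else prodw awi xs)"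
  by (induction xs) (auto simp: forget_append)
lemma strand_prodw_aw[simp]: "strand p (prodw aw xs) = (if p = 1 then prodw (\<lambda>k. [(True, k)]) xs else [])"
  by (induction xs) (auto simp: strand_append)
lemma strand_prodw_awi[simp]: "strand p (prodw awi xs) = (if p = 1 then prodw (\<lambda>k. [(False, k)]) xs else [])"
  by (induction xs) (auto simp: strand_append)
lemma strand_prodw_sw[simp]: "strand p (prodw sw xs) = []"
  by (induction xs arbitrary: p) (auto simp: strand_append)
lemma strand_prodw_swi[simp]: "strand p (prodw swi xs) = []"
  by (induction xs arbitrary: p) (auto simp: strand_append)

lemma trk_U: "a \<le> b \<Longrightarrow> trk p (U a b) = (if p = a then b else if a < p \<and> p \<le> b then p - 1 else p)"
proof (induction b)
  case 0 then show ?case by simp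
next
  case (Suc b)
  show ?case
  proof (cases "a = Suc b")
    case True then show ?thesis by simp
  next
    case False
    then have "a \<le> b" using Suc by simp
    then show ?thesis using Suc by (auto simp: swp_def)
  qed
qed

lemma U_snoc: "0 < b \<Longrightarrow> c \<le> b - Suc 0 \<Longrightarrow> U c (b - Suc 0) @ sw (b - Suc 0) = U c b"
  by (cases b) auto
lemma Dn_cons: "0 < b \<Longrightarrow> c \<le> b - Suc 0 \<Longrightarrow> sw (b - Suc 0) @ Dn c (b - Suc 0) = Dn c b"
  by (cases b) auto

lemma forget_U: "a \<le> b \<Longrightarrow> forget p (U a b) =
   (if p < a then U (a - 1) (b - 1) else if p = a then [] else if p \<le> b then U a (b - 1) else U a b)"
proof (induction b)
  case 0 then show ?case by simp
next
  case (Suc b)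
  show ?case
  proof (cases "a = Suc b")
    case True then show ?thesis by simp
  next
    case False
    then have ab: "a \<le> b" using Suc by simp
    have e: "U a (Suc b) = U a b @ sw b" using ab by simp
    show ?thesis unfolding e forget_append Suc.IH[OF ab] trk_U[OF ab]
      using ab by (auto simp: swp_def U_snoc)
  qed
qed

lemma trk_Dn: "a \<le> b \<Longrightarrow> trk p (Dn a b) = (if p = b then a else if a \<le> p \<and> p < b then p + 1 else p)"
proof (induction b arbitrary: p)
  case 0 then show ?case by simp
next
  case (Suc b)
  show ?case
  proof (cases "a = Suc b")
    case True then show ?thesis by simp
  next
    case False
    then have "a \<le> b" using Suc by simp
    then show ?thesis using Suc by (auto simp: swp_def)
  qed
qed

lemma forget_Dn: "a \<le> b \<Longrightarrow> forget p (Dn a b) =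
   (if p < a then Dn (a - 1) (b - 1) else if p < b then Dn a (b - 1) else if p = b then [] else Dn a b)"
proof (induction b arbitrary: p)
  case 0 then show ?case by simp
next
  case (Suc b)
  show ?case
  proof (cases "a = Suc b")
    case True then show ?thesis by simp
  next
    case False
    then have ab: "a \<le> b" using Suc by simp
    have e: "Dn a (Suc b) = sw b @ Dn a b" using ab by simp
    show ?thesis unfolding e forget_append Suc.IH[OF ab]
      using ab by (auto simp: swp_def Dn_cons)
  qed
qed


lemma surf_split: "2 \<le> n \<Longrightarrow> surf_rhs n = U 1 (n - 1) @ sw (n - 1) @ sw (n - 1) @ Dn 1 (n - 1)"
  by (simp add: surf_rhs_def)

lemma trk_surf: "2 \<le> n \<Longrightarrow> trk p (surf_rhs n) = p"
  by (auto simp: surf_split trk_U trk_Dn swp_def)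

lemma forget_surf: "2 \<le> n \<Longrightarrow> 1 \<le> p \<Longrightarrow> p \<le> n \<Longrightarrow>
   forget p (surf_rhs n) = (if p = 1 then [] else surf_rhs (n - 1))"
proof -
  assume n: "2 \<le> n" and p: "1 \<le> p" "p \<le> n"
  consider "p = 1" | "1 < p" "p < n" | "p = n" using p by linarith
  then show ?thesis
  proof cases
    case 1
    then show ?thesis using n
      by (simp add: surf_split forget_append forget_U forget_Dn trk_U swp_def)
  next
    case 2
    then have "surf_rhs (n - 1) = U 1 (n - 2) @ sw (n - 2) @ sw (n - 2) @ Dn 1 (n - 2)"
      using surf_split[of "n - 1"] by (simp add: numeral_2_eq_2)
    then show ?thesis using n 2
      by (simp add: surf_split forget_append forget_U forget_Dn trk_U swp_def numeral_2_eq_2)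
  next
    case 3
    obtain m where m: "n = Suc (Suc m)" using n by (metis add_2_eq_Suc le_Suc_ex)
    show ?thesis
    proof (cases m)
      case 0
      then show ?thesis using 3 m by (simp add: surf_rhs_def sw_def swp_def)
    next
      case (Suc k)
      have e: "surf_rhs (n - 1) = U 1 m @ sw m @ sw m @ Dn 1 m"
        using surf_split[of "n - 1"] m Suc by simp
      have e1: "U 1 (n - 1) = U 1 m @ sw m" using m Suc by simp
      have e2: "Dn 1 (n - 1) = sw m @ Dn 1 m" using m Suc by simp
      show ?thesis using n 3 m Suc
        by (simp add: surf_split forget_append forget_U forget_Dn trk_U swp_def e e1 e2)
    qed
  qed
qed


lemma rel_far: "1 \<le> i \<Longrightarrow> i \<le> m - 1 \<Longrightarrow> 1 \<le> j \<Longrightarrow> j \<le> m - 1 \<Longrightarrow> i + 2 \<le> j \<or> j + 2 \<le> i \<Longrightarrow>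
   (sw i @ sw j, sw j @ sw i) \<in> braid_rels g m"
  unfolding braid_rels_def by blast

lemma rel_braid: "1 \<le> i \<Longrightarrow> i + 1 \<le> m - 1 \<Longrightarrow>
   (sw i @ sw (i+1) @ sw i, sw (i+1) @ sw i @ sw (i+1)) \<in> braid_rels g m"
  unfolding braid_rels_def by blast

lemma rel_braid2: "1 \<le> i \<Longrightarrow> Suc i \<le> m - 1 \<Longrightarrow> j = Suc i \<Longrightarrow>
   (sw i @ sw j @ sw i, sw j @ sw i @ sw j) \<in> braid_rels g m"
  unfolding braid_rels_def by auto

lemma rel_surf: "(prodw aw [1..<2*g+1] @ prodw awi [1..<2*g+1], surf_rhs m) \<in> braid_rels g m"
  unfolding braid_rels_def by blast

lemma rel_aA: "2 \<le> m \<Longrightarrow> r \<in> {1..2*g} \<Longrightarrow> s \<in> {1..2*g} \<Longrightarrow> r \<noteq> s \<Longrightarrow>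
   (aw r @ A2w g s, A2w g s @ aw r) \<in> braid_rels g m"
  unfolding braid_rels_def by blast

lemma rel_PA: "2 \<le> m \<Longrightarrow> r \<in> {1..2*g} \<Longrightarrow>
   (prodw aw [1..<r+1] @ A2w g r, sw 1 @ sw 1 @ A2w g r @ prodw aw [1..<r+1]) \<in> braid_rels g m"
  unfolding braid_rels_def by blast

lemma rel_as: "r \<in> {1..2*g} \<Longrightarrow> 2 \<le> i \<Longrightarrow> i \<le> m - 1 \<Longrightarrow>
   (aw r @ sw i, sw i @ aw r) \<in> braid_rels g m"
  unfolding braid_rels_def by blast

lemma braid_rels_cases:
  assumes "(l, r) \<in> braid_rels g n"
  obtains (far) i j where "l = sw i @ sw j" "r = sw j @ sw i" "1 \<le> i" "i \<le> n - 1" "1 \<le> j" "j \<le> n - 1" "i + 2 \<le> j \<or> j + 2 \<le> i"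
  | (braid) i where "l = sw i @ sw (i+1) @ sw i" "r = sw (i+1) @ sw i @ sw (i+1)" "1 \<le> i" "i + 1 \<le> n - 1"
  | (surf) "l = prodw aw [1..<2*g+1] @ prodw awi [1..<2*g+1]" "r = surf_rhs n"
  | (aA) rr s where "l = aw rr @ A2w g s" "r = A2w g s @ aw rr" "2 \<le> n" "rr \<in> {1..2*g}" "s \<in> {1..2*g}" "rr \<noteq> s"
  | (PA) rr where "l = prodw aw [1..<rr+1] @ A2w g rr" "r = sw 1 @ sw 1 @ A2w g rr @ prodw aw [1..<rr+1]" "2 \<le> n" "rr \<in> {1..2*g}"
  | (as) rr i where "l = aw rr @ sw i" "r = sw i @ aw rr" "rr \<in> {1..2*g}" "2 \<le> i" "i \<le> n - 1"
  using assms unfolding braid_rels_def by blast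

definition Yw :: "nat \<Rightarrow> nat \<Rightarrow> bgen word" where
  "Yw g s = prodw aw [1..<s] @ prodw awi [s+1..<2*g+1]"

lemma A2w_Y: "A2w g s = swi 1 @ Yw g s @ swi 1"
  by (simp add: A2w_def Yw_def)

lemma trk_Yw[simp]: "trk p (Yw g s) = p" by (simp add: Yw_def del: upt_Suc)
lemma forget_Yw[simp]: "forget p (Yw g s) = (if p = 1 then [] else Yw g s)"
  by (simp add: Yw_def forget_append del: upt_Suc)

lemma trk_A2w[simp]: "trk p (A2w g s) = p" by (simp add: A2w_Y swp_def)
lemma forget_A2w: "1 \<le> p \<Longrightarrow> forget p (A2w g s) = (if p = 1 then Yw g s else if p = 2 then [] else A2w g s)"
  by (auto simp: A2w_Y forget_append swp_def)
lemma strand_A2w: "strand p (A2w g s) = (if p = 2 then strand 1 (Yw g s) else [])"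
  by (auto simp: A2w_Y strand_append swp_def Yw_def)

lemma forget_rel:
  assumes "(l, r) \<in> braid_rels g n" "2 \<le> n" "p \<in> {1..n}"
  shows "trk p l = trk p r \<and> pres_eq (braid_rels g (n - 1)) (forget p l) (forget p r)"
  using assms(1)
proof (cases rule: braid_rels_cases)
  case (far i j)
  then show ?thesis using assms(2,3)
    by (auto simp: forget_append swp_def pres_eq.refl intro!: pe_rel rel_far)
next
  case (braid i)
  then show ?thesis using assms(2,3)
    by (auto simp: forget_append swp_def pres_eq.refl intro!: pe_rel rel_braid2)
next
  case surf
  have t: "trk p l = trk p r" using surf assms(2) by (simp add: trk_surf del: upt_Suc)
  show ?thesis
  proof (cases "p = 1")
    case True
    then show ?thesis using t surf assms(2,3) by (simp add: forget_append forget_surf pres_eq.refl del: upt_Suc)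
  next
    case False
    then show ?thesis using t surf assms(2,3) pe_rel[OF rel_surf[of g "n - 1"]]
      by (simp add: forget_append forget_surf del: upt_Suc)
  qed
next
  case (aA rr s)
  then show ?thesis using assms(2,3)
    by (auto simp: forget_append forget_A2w pres_eq.refl intro!: pe_rel rel_aA)
next
  case (PA rr)
  have t: "trk p l = trk p r" using PA by (simp add: swp_def del: upt_Suc)
  consider "p = 1" | "p = 2" | "3 \<le> p" using assms(3) by force
  then show ?thesis
  proof cases
    case 1
    then show ?thesis using t PA by (simp add: forget_append forget_A2w swp_def pres_eq.refl del: upt_Suc)
  next
    case 2
    then show ?thesis using t PA by (simp add: forget_append forget_A2w swp_def pres_eq.refl del: upt_Suc)
  next
    case 3
    then have "2 \<le> n - 1" using assms(3) by simp
    then show ?thesis using t PA 3 pe_rel[OF rel_PA[of "n - 1" rr g]]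
      by (simp add: forget_append forget_A2w swp_def del: upt_Suc)
  qed
next
  case (as rr i)
  then show ?thesis using assms(2,3)
    by (auto simp: forget_append swp_def pres_eq.refl intro!: pe_rel rel_as)
qed


lemma trk_rel:
  assumes "(l, r) \<in> braid_rels g n"
  shows "trk p l = trk p r"
  using assms
proof (cases rule: braid_rels_cases)
  case surf
  have "trk p r = p"
    using surf trk_surf[of n p] by (cases "2 \<le> n") (auto simp: surf_rhs_def)
  then show ?thesis using surf by (simp del: upt_Suc)
qed (auto simp: swp_def)

lemma pi_surf_trivial:
  "pres_eq (pi_rels g) (prodw (\<lambda>k. [(True, k)]) [1..<2*g+1] @ prodw (\<lambda>k. [(False, k)]) [1..<2*g+1]) []"
proof -
  let ?xs = "[1..<2*g+1]"
  have iv: "inv_word (prodw (\<lambda>k. [(False, k)]) xs) = prodw (\<lambda>k. [(True, k)]) (rev xs)" for xs :: "nat list"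
    by (induct xs) auto
  have "pres_eq (pi_rels g) (prodw (\<lambda>k. [(True, k)]) ?xs @ prodw (\<lambda>k. [(False, k)]) ?xs)
      (prodw (\<lambda>k. [(True, k)]) (rev ?xs) @ prodw (\<lambda>k. [(False, k)]) ?xs)"
    using pres_eq.rel[of _ _ "pi_rels g" "[]" "prodw (\<lambda>k. [(False, k)]) ?xs"]
    by (simp add: pi_rels_def del: upt_Suc)
  moreover have "pres_eq (pi_rels g) (prodw (\<lambda>k. [(True, k)]) (rev ?xs) @ prodw (\<lambda>k. [(False, k)]) ?xs) []"
    using pe_inv_l[of "pi_rels g" "prodw (\<lambda>k. [(False, k)]) ?xs"] unfolding iv .
  ultimately show ?thesis by (rule pres_eq.trans)
qed

lemma strand_rel:
  assumes "(l, r) \<in> braid_rels g n"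
  shows "pres_eq (pi_rels g) (strand p l) (strand p r)"
  using assms
proof (cases rule: braid_rels_cases)
  case surf
  show ?thesis
  proof (cases "p = 1")
    case True
    then show ?thesis using surf pi_surf_trivial[of g]
      by (simp add: strand_append surf_rhs_def del: upt_Suc)
  next
    case False
    then show ?thesis using surf by (simp add: strand_append surf_rhs_def pres_eq.refl del: upt_Suc)
  qed
next
  case (aA rr s)
  then show ?thesis by (auto simp: strand_append strand_A2w pres_eq.refl)
next
  case (PA rr)
  then show ?thesis by (auto simp: strand_append strand_A2w pres_eq.refl swp_def simp del: upt_Suc)
qed (auto simp: strand_append pres_eq.refl swp_def)

lemma rels_valid:
  assumes "(l, r) \<in> braid_rels g n"
  shows "l \<in> lists (UNIV \<times> braid_gens g n) \<and> r \<in> lists (UNIV \<times> braid_gens g n)"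
  using assms
proof (cases rule: braid_rels_cases)
  case surf
  then show ?thesis
    by (auto simp: surf_rhs_def sw_def aw_def awi_def prodw_def simp del: upt_Suc)
next
  case (aA rr s)
  then show ?thesis by (auto simp: A2w_def sw_def swi_def aw_def awi_def prodw_def simp del: upt_Suc)
next
  case (PA rr)
  then show ?thesis by (auto simp: A2w_def sw_def swi_def aw_def awi_def prodw_def simp del: upt_Suc)
qed (auto simp: sw_def aw_def)

lemma forget_can: "pres_eq R' (forget p [(b, x), (\<not> b, x)]) []"
  by (cases x) (auto simp: pres_eq.refl pe_cancel1)

lemma strand_can: "pres_eq R' (strand p [(b, x), (\<not> b, x)]) []"
  by (cases x) (auto simp: pres_eq.refl pe_cancel1)

lemma forget_compat:
  assumes "pres_eq (braid_rels g n) v w" "v \<in> bwords g n" "w \<in> bwords g n" "2 \<le> n" "p \<in> {1..n}"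
  shows "pres_eq (braid_rels g (n - 1)) (forget p v) (forget p w)"
proof -
  have "pres_eq (braid_rels g (n - 1)) (forget p (cl (braid_gens g n) v)) (forget p (cl (braid_gens g n) w))"
    apply (rule compat_gen[where f=forget and R="braid_rels g n" and S="braid_gens g n" and P="{1..n}"
        and R'="braid_rels g (n - 1)"])
    apply (rule forget_append)
    apply (erule rels_valid)
    apply (erule (1) trk_range)
    apply (erule (1) forget_rel[OF _ assms(4)])
    apply (rule forget_can)
    apply (rule assms(1))
    apply (rule assms(5))
    done
  then show ?thesis using assms(2,3) by (simp add: cl_valid bwords_def)
qed

lemma strand_compat:
  assumes "pres_eq (braid_rels g n) v w" "v \<in> bwords g n" "w \<in> bwords g n"
  shows "pres_eq (pi_rels g) (strand p v) (strand p w)"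
proof -
  have "pres_eq (pi_rels g) (strand p (cl (braid_gens g n) v)) (strand p (cl (braid_gens g n) w))"
    apply (rule compat_gen[where f=strand and R="braid_rels g n" and S="braid_gens g n" and P="UNIV"
        and R'="pi_rels g"])
    apply (rule strand_append)
    apply (erule rels_valid)
    apply simp
    apply (blast intro: trk_rel strand_rel)
    apply (rule strand_can)
    apply (rule assms(1))
    apply simp
    done
  then show ?thesis using assms(2,3) by (simp add: cl_valid bwords_def)
qed

lemma some_rep:
  assumes "w \<in> bwords g n"
  shows "(SOME v. v \<in> pclass (braid_rels g n) w \<inter> bwords g n) \<in> bwords g n \<and>
         pres_eq (braid_rels g n) w (SOME v. v \<in> pclass (braid_rels g n) w \<inter> bwords g n)"
proof -
  have "w \<in> pclass (braid_rels g n) w \<inter> bwords g n" using assms by (simp add: pclass_def pres_eq.refl)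
  then have "(SOME v. v \<in> pclass (braid_rels g n) w \<inter> bwords g n) \<in> pclass (braid_rels g n) w \<inter> bwords g n"
    by (rule someI)
  then show ?thesis by (simp add: pclass_def)
qed

lemma rho_cls:
  assumes "w \<in> bwords g n" "2 \<le> n"
  shows "rho g n (pclass (braid_rels g n) w) = pclass (braid_rels g (n - 1)) (forget 1 w)"
proof -
  let ?v = "SOME v. v \<in> pclass (braid_rels g n) w \<inter> bwords g n"
  have "pres_eq (braid_rels g (n - 1)) (forget 1 w) (forget 1 ?v)"
    using some_rep[OF assms(1)] forget_compat[OF _ assms(1) _ assms(2)] assms(2) by auto
  then show ?thesis unfolding rho_def by (simp add: pclass_eq_iff pres_eq.sym)
qed

lemma phi_cls:
  assumes "w \<in> bwords g n" "s \<in> {1..n}"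
  shows "phi g n (pclass (braid_rels g n) w) s = pclass (pi_rels g) (strand s w)"
proof -
  let ?v = "SOME v. v \<in> pclass (braid_rels g n) w \<inter> bwords g n"
  have "pres_eq (pi_rels g) (strand s w) (strand s ?v)"
    using some_rep[OF assms(1)] strand_compat[OF _ assms(1)] by auto
  then show ?thesis unfolding phi_def using assms(2) by (simp add: pclass_eq_iff pres_eq.sym)
qed


section \<open>Abstract group algebra\<close>

context group begin

lemma cancel_l1: "x \<in> carrier G \<Longrightarrow> y \<in> carrier G \<Longrightarrow> x \<otimes> (inv x \<otimes> y) = y"
  by (simp add: m_assoc[symmetric])
lemma cancel_l2: "x \<in> carrier G \<Longrightarrow> y \<in> carrier G \<Longrightarrow> inv x \<otimes> (x \<otimes> y) = y"
  by (simp add: m_assoc[symmetric])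

lemmas gsimps = m_assoc inv_mult_group inv_inv l_inv r_inv l_one r_one m_closed inv_closed cancel_l1 cancel_l2

lemma comm_inv: "x \<in> carrier G \<Longrightarrow> y \<in> carrier G \<Longrightarrow> x \<otimes> y = y \<otimes> x \<Longrightarrow> inv x \<otimes> y = y \<otimes> inv x"
proof -
  assume c: "x \<in> carrier G" "y \<in> carrier G" and e: "x \<otimes> y = y \<otimes> x"
  have "inv x \<otimes> y = inv x \<otimes> (y \<otimes> x) \<otimes> inv x" using c by (simp add: gsimps)
  also have "\<dots> = inv x \<otimes> (x \<otimes> y) \<otimes> inv x" using e by simp
  also have "\<dots> = y \<otimes> inv x" using c by (simp add: gsimps)
  finally show ?thesis .
qed

lemma comm_mult: "x \<in> carrier G \<Longrightarrow> y \<in> carrier G \<Longrightarrow> z \<in> carrier G \<Longrightarrow>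
   x \<otimes> z = z \<otimes> x \<Longrightarrow> y \<otimes> z = z \<otimes> y \<Longrightarrow> (x \<otimes> y) \<otimes> z = z \<otimes> (x \<otimes> y)"
  by (metis m_assoc)

lemma conj_inv: "x \<in> carrier G \<Longrightarrow> t \<in> carrier G \<Longrightarrow> t' \<in> carrier G \<Longrightarrow>
   x \<otimes> t' = t \<otimes> x \<Longrightarrow> inv x \<otimes> t = t' \<otimes> inv x"
proof -
  assume c: "x \<in> carrier G" "t \<in> carrier G" "t' \<in> carrier G" and e: "x \<otimes> t' = t \<otimes> x"
  have "inv x \<otimes> t = inv x \<otimes> (t \<otimes> x) \<otimes> inv x" using c by (simp add: gsimps)
  also have "\<dots> = inv x \<otimes> (x \<otimes> t') \<otimes> inv x" using e by simp
  also have "\<dots> = t' \<otimes> inv x" using c by (simp add: gsimps)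
  finally show ?thesis .
qed

text \<open>Telescoping argument.\<close>

lemma alt_commute:
  fixes a :: "nat \<Rightarrow> 'a" and P N Y :: "nat \<Rightarrow> 'a" and s :: 'a and k gg :: nat
  assumes car: "s \<in> carrier G" "\<And>i. a i \<in> carrier G" "\<And>i. P i \<in> carrier G" "\<And>i. N i \<in> carrier G" "\<And>i. Y i \<in> carrier G"
    and P0: "P 0 = \<one>" and PS: "\<And>i. i < 2*gg \<Longrightarrow> P (Suc i) = P i \<otimes> a (Suc i)"
    and Nend: "N (2*gg+1) = \<one>" and NS: "\<And>i. 1 \<le> i \<Longrightarrow> i \<le> 2*gg \<Longrightarrow> N i = inv (a i) \<otimes> N (Suc i)"
    and Yd: "\<And>t. 1 \<le> t \<Longrightarrow> t \<le> 2*gg \<Longrightarrow> Y t = P (t - 1) \<otimes> N (t + 1)"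
    and cm: "\<And>t. 1 \<le> t \<Longrightarrow> t \<le> 2*gg \<Longrightarrow> t \<noteq> k \<Longrightarrow>
              a k \<otimes> (inv s \<otimes> Y t \<otimes> inv s) = (inv s \<otimes> Y t \<otimes> inv s) \<otimes> a k"
    and k: "1 \<le> k" "k \<le> 2*gg"
  shows "a k \<otimes> (if odd k then inv s \<otimes> a k \<otimes> inv s else s \<otimes> a k \<otimes> s)
       = (if odd k then inv s \<otimes> a k \<otimes> inv s else s \<otimes> a k \<otimes> s) \<otimes> a k"
proof -
  define A where "A t = inv s \<otimes> Y t \<otimes> inv s" for t
  define E where "E i = inv s \<otimes> P i \<otimes> s" for i
  define C where "C x \<longleftrightarrow> x \<in> carrier G \<and> a k \<otimes> x = x \<otimes> a k" for x
  have Acar: "A t \<in> carrier G" for t using car by (simp add: A_def)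
  have Ecar: "E t \<in> carrier G" for t using car by (simp add: E_def)
  have Cm: "C x \<Longrightarrow> C y \<Longrightarrow> C (x \<otimes> y)" for x y
  proof -
    assume x: "C x" and y: "C y"
    then have c: "x \<in> carrier G" "y \<in> carrier G" "a k \<in> carrier G" using car(2) by (auto simp: C_def)
    have "a k \<otimes> (x \<otimes> y) = (a k \<otimes> x) \<otimes> y" using c by (simp add: m_assoc)
    also have "\<dots> = x \<otimes> (a k \<otimes> y)" using x c by (simp add: C_def m_assoc)
    also have "\<dots> = (x \<otimes> y) \<otimes> a k" using y c by (simp add: C_def m_assoc)
    finally show ?thesis using c by (simp add: C_def)
  qed
  have Ci: "C x \<Longrightarrow> C (inv x)" for x
    unfolding C_def using car(2) comm_inv[of x "a k"] by auto
  have CA: "1 \<le> t \<Longrightarrow> t \<le> 2*gg \<Longrightarrow> t \<noteq> k \<Longrightarrow> C (A t)" for t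
    unfolding C_def A_def using cm car by simp
  have PN: "1 \<le> t \<Longrightarrow> t + 1 \<le> 2*gg \<Longrightarrow> Y t \<otimes> inv (Y (t + 1)) = P (t - 1) \<otimes> inv (P (t + 1))" for t
  proof -
    assume t: "1 \<le> t" "t + 1 \<le> 2*gg"
    have "Y t = P (t - 1) \<otimes> (inv (a (t + 1)) \<otimes> N (t + 2))" using Yd[of t] NS[of "t+1"] t by simp
    moreover have "Y (t + 1) = P (t - 1) \<otimes> a t \<otimes> N (t + 2)"
      using Yd[of "t+1"] PS[of "t - 1"] t by simp
    moreover have "P (t + 1) = P (t - 1) \<otimes> a t \<otimes> a (t + 1)"
      using PS[of "t"] PS[of "t - 1"] t by simp
    ultimately show ?thesis using car by (simp add: gsimps)
  qed
  have AE: "1 \<le> t \<Longrightarrow> t + 1 \<le> 2*gg \<Longrightarrow> A t \<otimes> inv (A (t + 1)) = E (t - 1) \<otimes> inv (E (t + 1))" for t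
  proof -
    assume t: "1 \<le> t" "t + 1 \<le> 2*gg"
    have "A t \<otimes> inv (A (t + 1)) = inv s \<otimes> (Y t \<otimes> inv (Y (t + 1))) \<otimes> s"
      using car by (simp add: A_def gsimps)
    also have "\<dots> = E (t - 1) \<otimes> inv (E (t + 1))"
      using car PN[OF t] by (simp add: E_def gsimps)
    finally show ?thesis .
  qed
  have tele: "(\<forall>t. i < t \<and> t \<le> i + 2*m \<longrightarrow> 1 \<le> t \<and> t \<le> 2*gg \<and> t \<noteq> k) \<Longrightarrow> C (E i \<otimes> inv (E (i + 2*m)))" for i m
  proof (induction m)
    case 0
    then show ?case using Ecar by (simp add: C_def car)
  next
    case (Suc m)
    then have h: "C (E i \<otimes> inv (E (i + 2*m)))" by auto
    have t1: "1 \<le> i + 2*m + 1" "i + 2*m + 1 \<le> 2*gg" "i + 2*m + 1 \<noteq> k" "i + 2*m + 2 \<le> 2*gg" "i + 2*m + 2 \<noteq> k"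
      using Suc.prems by (auto dest: spec[of _ "i + 2*m + 1"] spec[of _ "i + 2*m + 2"])
    have "C (A (i + 2*m + 1) \<otimes> inv (A (i + 2*m + 1 + 1)))"
      using t1 by (intro Cm Ci CA) auto
    then have h2: "C (E (i + 2*m) \<otimes> inv (E (i + 2 * Suc m)))"
      using AE[of "i + 2*m + 1"] t1 by (simp add: add.assoc)
    have "E i \<otimes> inv (E (i + 2 * Suc m)) = (E i \<otimes> inv (E (i + 2*m))) \<otimes> (E (i + 2*m) \<otimes> inv (E (i + 2 * Suc m)))"
      using Ecar by (simp add: gsimps)
    then show ?case using Cm[OF h h2] by simp
  qed
  have E0: "E 0 = \<one>" using car by (simp add: E_def P0 gsimps)
  have Y2g: "Y (2*gg) = P (2*gg - 1)" using Yd[of "2*gg"] k Nend car by simp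
  show ?thesis
  proof (cases "odd k")
    case True
    define m where "m = k div 2"
    define m2 where "m2 = (2*gg - 1 - k) div 2"
    have m: "k = 2*m + 1" unfolding m_def using True by presburger
    have m2: "2*gg - 1 = k + 2*m2" unfolding m2_def using True k by presburger
    have c1: "C (E 0 \<otimes> inv (E (0 + 2*m)))" by (rule tele) (use m k in auto)
    have c2: "C (E k \<otimes> inv (E (k + 2*m2)))" by (rule tele) (use m2 k in auto)
    have c3: "C (A (2*gg))" using k True by (intro CA) auto
    have "E 0 \<otimes> inv (E (0 + 2*m)) \<otimes> (E k \<otimes> inv (E (k + 2*m2))) \<otimes> A (2*gg) = inv s \<otimes> a k \<otimes> inv s"
    proof -
      have pk: "P k = P (2*m) \<otimes> a k" using PS[of "2*m"] m k True by simp
      have "E 0 \<otimes> inv (E (0 + 2*m)) \<otimes> (E k \<otimes> inv (E (k + 2*m2))) \<otimes> A (2*gg)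
          = inv s \<otimes> (inv (P (2*m)) \<otimes> P k \<otimes> (inv (P (2*gg - 1)) \<otimes> Y (2*gg))) \<otimes> inv s"
        unfolding E0 using car m2 by (simp add: E_def A_def gsimps)
      also have "\<dots> = inv s \<otimes> a k \<otimes> inv s" unfolding Y2g pk using car by (simp add: gsimps)
      finally show ?thesis .
    qed
    then have "C (inv s \<otimes> a k \<otimes> inv s)" using Cm[OF Cm[OF c1 c2] c3] by simp
    then show ?thesis using True by (simp add: C_def)
  next
    case False
    have "C (inv s \<otimes> inv (a k) \<otimes> inv s)"
    proof (cases "k = 2*gg")
      case True
      define m where "m = gg - 1"
      have m: "2*gg - 2 = 0 + 2*m" unfolding m_def by simp
      have c1: "C (E 0 \<otimes> inv (E (0 + 2*m)))" by (rule tele) (use m k True in auto)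
      have c2: "C (A (2*gg - 1))" using k True by (intro CA) auto
      have "E 0 \<otimes> inv (E (0 + 2*m)) \<otimes> A (2*gg - 1) = inv s \<otimes> inv (a k) \<otimes> inv s"
      proof -
        have y: "Y (2*gg - 1) = P (2*gg - 2) \<otimes> (inv (a k) \<otimes> \<one>)"
        proof -
          have g1: "1 \<le> 2*gg - 1" "2*gg - 1 \<le> 2*gg" using k True False by presburger+
          have "2*gg - 1 - 1 = 2*gg - 2" "2*gg - 1 + 1 = 2*gg" using g1 by auto
          then show ?thesis using Yd[OF g1] NS[of "2*gg"] Nend k True by simp
        qed
        show ?thesis unfolding E0 m[symmetric] A_def E_def y using car by (simp add: gsimps P0)
      qed
      then show ?thesis using Cm[OF c1 c2] by simp
    next
      case kl: False
      then have kl: "k + 2 \<le> 2*gg" using k False by presburger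
      define m where "m = k div 2 - 1"
      define m2 where "m2 = (2*gg - 2 - k) div 2"
      have m: "k = 2*m + 2" unfolding m_def using False k by presburger
      have m2: "2*gg - 1 = (k + 1) + 2*m2" unfolding m2_def using False kl by presburger
      have c1: "C (E 0 \<otimes> inv (E (0 + 2*m)))" by (rule tele) (use m k in auto)
      have c2: "C (A (k - 1))" using k m by (intro CA) auto
      have c3: "C (inv (A (k + 1)))" using kl by (intro Ci CA) auto
      have c4: "C (E (k + 1) \<otimes> inv (E ((k + 1) + 2*m2)))" by (rule tele) (use m2 kl in auto)
      have c5: "C (A (2*gg))" using kl by (intro CA) auto
      have "E 0 \<otimes> inv (E (0 + 2*m)) \<otimes> A (k - 1) \<otimes> inv (A (k + 1)) \<otimes> (E (k + 1) \<otimes> inv (E ((k + 1) + 2*m2))) \<otimes> A (2*gg)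
          = inv s \<otimes> inv (a k) \<otimes> inv s"
      proof -
        have y1: "Y (k - 1) = P (2*m) \<otimes> (inv (a k) \<otimes> (inv (a (k+1)) \<otimes> N (k + 2)))"
          using Yd[of "k - 1"] NS[of k] NS[of "k+1"] k kl m by simp
        have y2: "Y (k + 1) = P k \<otimes> N (k + 2)" using Yd[of "k+1"] kl by simp
        have p: "P (k + 1) = P k \<otimes> a (k + 1)" using PS[of k] kl by simp
        show ?thesis unfolding E0 m2[symmetric] A_def E_def y1 y2 p Y2g using car
          by (simp add: gsimps P0)
      qed
      then show ?thesis using Cm[OF Cm[OF Cm[OF Cm[OF c1 c2] c3] c4] c5] by simp
    qed
    then have "C (inv (inv s \<otimes> inv (a k) \<otimes> inv s))" by (rule Ci)
    then show ?thesis using False car by (simp add: C_def gsimps)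
  qed
qed

lemma W_commute:
  assumes c: "s \<in> carrier G" "a \<in> carrier G"
    and h: "a \<otimes> (if odd k then inv s \<otimes> a \<otimes> inv s else s \<otimes> a \<otimes> s)
       = (if odd k then inv s \<otimes> a \<otimes> inv s else s \<otimes> a \<otimes> s) \<otimes> a"
  shows "(a \<otimes> (if odd k then inv s \<otimes> a \<otimes> inv s else s \<otimes> a \<otimes> s)) \<otimes> s
       = s \<otimes> (a \<otimes> (if odd k then inv s \<otimes> a \<otimes> inv s else s \<otimes> a \<otimes> s))"
proof (cases "odd k")
  case True
  then have h': "a \<otimes> (inv s \<otimes> a \<otimes> inv s) = (inv s \<otimes> a \<otimes> inv s) \<otimes> a" using h by simp
  have "s \<otimes> (a \<otimes> (inv s \<otimes> a \<otimes> inv s)) = s \<otimes> ((inv s \<otimes> a \<otimes> inv s) \<otimes> a)" using h' by simp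
  also have "\<dots> = (a \<otimes> (inv s \<otimes> a \<otimes> inv s)) \<otimes> s" using c by (simp add: gsimps)
  finally show ?thesis using True by simp
next
  case False
  then have h': "a \<otimes> (s \<otimes> a \<otimes> s) = (s \<otimes> a \<otimes> s) \<otimes> a" using h by simp
  have "(a \<otimes> (s \<otimes> a \<otimes> s)) \<otimes> s = ((s \<otimes> a \<otimes> s) \<otimes> a) \<otimes> s" using h' by simp
  also have "\<dots> = s \<otimes> (a \<otimes> (s \<otimes> a \<otimes> s))" using c by (simp add: gsimps)
  finally show ?thesis using False by simp
qed

end


abbreviation bcl :: "nat \<Rightarrow> nat \<Rightarrow> bgen word \<Rightarrow> bgen word set" where
  "bcl g n w \<equiv> pclass (braid_rels g n) w"

lemma Bgrp_group: "group (Bgrp g n)"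
  unfolding Bgrp_def by (rule pres_group_is_group)

lemma B_mult: "bcl g n a \<otimes>\<^bsub>Bgrp g n\<^esub> bcl g n b = bcl g n (a @ b)"
  unfolding Bgrp_def by (rule pres_mult)

lemma B_one: "\<one>\<^bsub>Bgrp g n\<^esub> = bcl g n []"
  unfolding Bgrp_def by (rule pres_one)

lemma B_carrier: "carrier (Bgrp g n) = bcl g n ` bwords g n"
  unfolding Bgrp_def bwords_def by (rule pres_carrier)

lemma B_in: "a \<in> bwords g n \<Longrightarrow> bcl g n a \<in> carrier (Bgrp g n)"
  by (simp add: B_carrier)

lemma B_inv: "a \<in> bwords g n \<Longrightarrow> inv\<^bsub>Bgrp g n\<^esub> (bcl g n a) = bcl g n (inv_word a)"
  unfolding Bgrp_def bwords_def by (rule pres_inv)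

lemma B_rel: "(l, r) \<in> braid_rels g n \<Longrightarrow> bcl g n l = bcl g n r"
  by (simp add: pclass_eq_iff pe_rel)

lemma bwords_append[simp]: "a @ b \<in> bwords g n \<longleftrightarrow> a \<in> bwords g n \<and> b \<in> bwords g n"
  by (simp add: bwords_def)
lemma bwords_Nil[simp]: "[] \<in> bwords g n" by (simp add: bwords_def)
lemma bwords_sw[simp]: "sw i \<in> bwords g n \<longleftrightarrow> 1 \<le> i \<and> i \<le> n - 1" by (simp add: bwords_def sw_def)
lemma bwords_swi[simp]: "swi i \<in> bwords g n \<longleftrightarrow> 1 \<le> i \<and> i \<le> n - 1" by (simp add: bwords_def swi_def)
lemma bwords_aw[simp]: "aw i \<in> bwords g n \<longleftrightarrow> 1 \<le> i \<and> i \<le> 2*g" by (simp add: bwords_def aw_def)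
lemma bwords_awi[simp]: "awi i \<in> bwords g n \<longleftrightarrow> 1 \<le> i \<and> i \<le> 2*g" by (simp add: bwords_def awi_def)
lemma bwords_inv[simp]: "inv_word a \<in> bwords g n \<longleftrightarrow> a \<in> bwords g n"
  by (metis bwords_def inv_word_inv_word inv_word_lists)
lemma bwords_prodw_aw: "(\<forall>x\<in>set xs. 1 \<le> x \<and> x \<le> 2*g) \<Longrightarrow> prodw aw xs \<in> bwords g n"
  by (induction xs) auto
lemma bwords_prodw_awi: "(\<forall>x\<in>set xs. 1 \<le> x \<and> x \<le> 2*g) \<Longrightarrow> prodw awi xs \<in> bwords g n"
  by (induction xs) auto
lemma bwords_Yw: "t \<le> 2*g \<Longrightarrow> Yw g t \<in> bwords g n"
  unfolding Yw_def by (auto intro!: bwords_prodw_aw bwords_prodw_awi simp del: upt_Suc)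

lemma inv_sw: "inv_word (sw i) = swi i" by (simp add: sw_def swi_def)
lemma inv_aw: "inv_word (aw i) = awi i" by (simp add: aw_def awi_def)

definition Wk :: "nat \<Rightarrow> bgen word" where
  "Wk k = (if odd k then aw k @ swi 1 @ aw k @ swi 1 else aw k @ sw 1 @ aw k @ sw 1)"

lemma bwords_Wk: "2 \<le> n \<Longrightarrow> 1 \<le> k \<Longrightarrow> k \<le> 2*g \<Longrightarrow> Wk k \<in> bwords g n"
  by (auto simp: Wk_def)

lemma Wk_comm:
  assumes n: "2 \<le> n" and k: "1 \<le> k" "k \<le> 2*g"
  shows "bcl g n (Wk k @ sw 1) = bcl g n (sw 1 @ Wk k)"
proof -
  interpret G: group "Bgrp g n" by (rule Bgrp_group)
  define s where "s = bcl g n (sw 1)"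
  define a where "a i = (if 1 \<le> i \<and> i \<le> 2*g then bcl g n (aw i) else \<one>\<^bsub>Bgrp g n\<^esub>)" for i
  define P where "P i = (if i \<le> 2*g then bcl g n (prodw aw [1..<i+1]) else \<one>\<^bsub>Bgrp g n\<^esub>)" for i
  define N where "N i = (if 1 \<le> i \<and> i \<le> 2*g+1 then bcl g n (prodw awi [i..<2*g+1]) else \<one>\<^bsub>Bgrp g n\<^esub>)" for i
  define Y where "Y t = (if 1 \<le> t \<and> t \<le> 2*g then bcl g n (Yw g t) else \<one>\<^bsub>Bgrp g n\<^esub>)" for t
  have sc: "s \<in> carrier (Bgrp g n)" using n by (simp add: s_def B_in)
  have ac: "a i \<in> carrier (Bgrp g n)" for i by (simp add: a_def B_in)
  have Pc: "P i \<in> carrier (Bgrp g n)" for i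
    by (auto simp: P_def intro!: B_in bwords_prodw_aw simp del: upt_Suc)
  have Nc: "N i \<in> carrier (Bgrp g n)" for i
    by (auto simp: N_def intro!: B_in bwords_prodw_awi simp del: upt_Suc)
  have Yc: "Y i \<in> carrier (Bgrp g n)" for i
    by (auto simp: Y_def Yw_def intro!: B_in bwords_prodw_aw bwords_prodw_awi simp del: upt_Suc)
  have P0: "P 0 = \<one>\<^bsub>Bgrp g n\<^esub>" by (simp add: P_def B_one)
  have PS: "i < 2*g \<Longrightarrow> P (Suc i) = P i \<otimes>\<^bsub>Bgrp g n\<^esub> a (Suc i)" for i
    by (simp add: P_def a_def B_mult)
  have Nend: "N (2*g+1) = \<one>\<^bsub>Bgrp g n\<^esub>" by (simp add: N_def B_one)
  have NS: "1 \<le> i \<Longrightarrow> i \<le> 2*g \<Longrightarrow> N i = inv\<^bsub>Bgrp g n\<^esub> (a i) \<otimes>\<^bsub>Bgrp g n\<^esub> N (Suc i)" for i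
  proof -
    assume i: "1 \<le> i" "i \<le> 2*g"
    have "[i..<2*g+1] = i # [Suc i..<2*g+1]" using i by (simp add: upt_rec)
    then show ?thesis using i by (simp add: N_def a_def B_mult B_inv inv_aw del: upt_Suc)
  qed
  have Yd: "1 \<le> t \<Longrightarrow> t \<le> 2*g \<Longrightarrow> Y t = P (t - 1) \<otimes>\<^bsub>Bgrp g n\<^esub> N (t + 1)" for t
    by (simp add: Y_def P_def N_def B_mult Yw_def del: upt_Suc)
  have A2: "1 \<le> t \<Longrightarrow> t \<le> 2*g \<Longrightarrow> bcl g n (A2w g t) = inv\<^bsub>Bgrp g n\<^esub> s \<otimes>\<^bsub>Bgrp g n\<^esub> Y t \<otimes>\<^bsub>Bgrp g n\<^esub> inv\<^bsub>Bgrp g n\<^esub> s" for t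
    using n by (simp add: A2w_Y s_def Y_def B_inv B_mult inv_sw)
  have cm: "1 \<le> t \<Longrightarrow> t \<le> 2*g \<Longrightarrow> t \<noteq> k \<Longrightarrow>
     a k \<otimes>\<^bsub>Bgrp g n\<^esub> (inv\<^bsub>Bgrp g n\<^esub> s \<otimes>\<^bsub>Bgrp g n\<^esub> Y t \<otimes>\<^bsub>Bgrp g n\<^esub> inv\<^bsub>Bgrp g n\<^esub> s)
     = (inv\<^bsub>Bgrp g n\<^esub> s \<otimes>\<^bsub>Bgrp g n\<^esub> Y t \<otimes>\<^bsub>Bgrp g n\<^esub> inv\<^bsub>Bgrp g n\<^esub> s) \<otimes>\<^bsub>Bgrp g n\<^esub> a k" for t
  proof -
    assume t: "1 \<le> t" "t \<le> 2*g" "t \<noteq> k"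
    have "bcl g n (aw k @ A2w g t) = bcl g n (A2w g t @ aw k)"
      by (rule B_rel, rule rel_aA) (use n k t in auto)
    then show ?thesis using k t by (simp add: A2[symmetric] a_def B_mult)
  qed
  have X: "a k \<otimes>\<^bsub>Bgrp g n\<^esub> (if odd k then inv\<^bsub>Bgrp g n\<^esub> s \<otimes>\<^bsub>Bgrp g n\<^esub> a k \<otimes>\<^bsub>Bgrp g n\<^esub> inv\<^bsub>Bgrp g n\<^esub> s else s \<otimes>\<^bsub>Bgrp g n\<^esub> a k \<otimes>\<^bsub>Bgrp g n\<^esub> s)
       = (if odd k then inv\<^bsub>Bgrp g n\<^esub> s \<otimes>\<^bsub>Bgrp g n\<^esub> a k \<otimes>\<^bsub>Bgrp g n\<^esub> inv\<^bsub>Bgrp g n\<^esub> s else s \<otimes>\<^bsub>Bgrp g n\<^esub> a k \<otimes>\<^bsub>Bgrp g n\<^esub> s) \<otimes>\<^bsub>Bgrp g n\<^esub> a k"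
    by (rule G.alt_commute[where P=P and N=N and Y=Y and gg=g, OF sc ac Pc Nc Yc P0 PS Nend NS Yd cm k])
  have W: "bcl g n (Wk k) = a k \<otimes>\<^bsub>Bgrp g n\<^esub> (if odd k then inv\<^bsub>Bgrp g n\<^esub> s \<otimes>\<^bsub>Bgrp g n\<^esub> a k \<otimes>\<^bsub>Bgrp g n\<^esub> inv\<^bsub>Bgrp g n\<^esub> s else s \<otimes>\<^bsub>Bgrp g n\<^esub> a k \<otimes>\<^bsub>Bgrp g n\<^esub> s)"
    using n k by (simp add: Wk_def a_def s_def B_mult B_inv inv_sw)
  have "bcl g n (Wk k) \<otimes>\<^bsub>Bgrp g n\<^esub> s = s \<otimes>\<^bsub>Bgrp g n\<^esub> bcl g n (Wk k)"
    unfolding W by (rule G.W_commute[OF sc ac X])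
  then show ?thesis by (simp add: s_def B_mult)
qed


section \<open>Doubling a strand\<close>

definition dblx :: "nat \<Rightarrow> bool \<times> bgen \<Rightarrow> bgen word" where
  "dblx q x = (case x of
     (b, Sg i) \<Rightarrow> (if i + 1 < q then [(b, Sg i)] else if q < i then [(b, Sg (i+1))]
        else if i = q then (if b then sw (q+1) @ sw q else swi (q+1) @ swi q)
        else (if b then sw i @ sw (i+1) else swi i @ swi (i+1)))
   | (b, Ag k) \<Rightarrow> (if q = 1 then (if b then Wk k else inv_word (Wk k)) else [(b, Ag k)]))"

definition trk1 :: "nat \<Rightarrow> bool \<times> bgen \<Rightarrow> nat" where
  "trk1 q x = (case snd x of Sg i \<Rightarrow> swp i q | Ag k \<Rightarrow> q)"

lemma trk_Cons1: "trk q (x # w) = trk (trk1 q x) w"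
  by (cases x; cases "snd x") (auto simp: trk1_def)

lemma trk_single: "trk q [x] = trk1 q x"
  by (cases x; cases "snd x") (auto simp: trk1_def)

lemma strand_Cons1: "strand q (x # w) = strand q [x] @ strand (trk1 q x) w"
  by (cases x; cases "snd x") (auto simp: trk1_def swp_def)

fun dbl :: "nat \<Rightarrow> bgen word \<Rightarrow> bgen word" where
  "dbl q [] = []"
| "dbl q (x # w) = dblx q x @ dbl (trk1 q x) w"

lemma dbl_append: "dbl q (x @ y) = dbl q x @ dbl (trk q x) y"
  by (induction x arbitrary: q) (auto simp: trk_Cons1)

definition emb :: "nat \<Rightarrow> nat \<Rightarrow> nat" where
  "emb q t = (if t < q then t else t + 1)"

lemma trk_Wk[simp]: "trk p (Wk k) = p" by (simp add: Wk_def swp_def)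
lemma forget_Wk: "forget (Suc 0) (Wk k) = [(True, Ag k)]" by (simp add: Wk_def forget_append swp_def aw_def)
lemma strand_Wk: "strand p (Wk k) = (if p = 1 \<or> p = 2 then [(True, k)] else [])"
  by (auto simp: Wk_def strand_append swp_def)
lemma trk_invWk[simp]: "trk p (inv_word (Wk k)) = p"
  using trk_inv[of p "Wk k"] by simp
lemma forget_invWk: "forget (Suc 0) (inv_word (Wk k)) = [(False, Ag k)]"
  using forget_inv[of "Suc 0" "Wk k"] by (simp add: forget_Wk)
lemma strand_invWk: "strand p (inv_word (Wk k)) = (if p = 1 \<or> p = 2 then [(False, k)] else [])"
  using strand_inv[of p "Wk k"] by (simp add: strand_Wk)

lemma valid_letter: "x \<in> UNIV \<times> braid_gens g m \<Longrightarrow> (\<exists>b i. x = (b, Sg i) \<and> 1 \<le> i \<and> i \<le> m - 1) \<or> (\<exists>b k. x = (b, Ag k) \<and> 1 \<le> k \<and> k \<le> 2*g)"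
  by (cases x; cases "snd x") auto

lemma dblx_forget: "1 \<le> q \<Longrightarrow> x \<in> UNIV \<times> braid_gens g m \<Longrightarrow> forget q (dblx q x) = [x] \<and> trk q (dblx q x) = trk1 q x"
  by (drule valid_letter) (auto simp: dblx_def trk1_def forget_append swp_def forget_Wk forget_invWk sw_def swi_def)

lemma dbl_forget: "1 \<le> q \<Longrightarrow> w \<in> lists (UNIV \<times> braid_gens g m) \<Longrightarrow> forget q (dbl q w) = w \<and> trk q (dbl q w) = trk q w"
proof (induction w arbitrary: q)
  case Nil then show ?case by simp
next
  case (Cons x w)
  have x: "x \<in> UNIV \<times> braid_gens g m" and w: "w \<in> lists (UNIV \<times> braid_gens g m)" using Cons.prems by auto
  have q1: "1 \<le> trk1 q x" using valid_letter[OF x] Cons.prems(1) by (auto simp: swp_def trk1_def)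
  have a: "forget q (dblx q x) = [x]" "trk q (dblx q x) = trk1 q x" using dblx_forget[OF Cons.prems(1) x] by auto
  have b: "forget (trk1 q x) (dbl (trk1 q x) w) = w" "trk (trk1 q x) (dbl (trk1 q x) w) = trk (trk1 q x) w"
    using Cons.IH[OF q1 w] by auto
  have "forget q (dbl q (x # w)) = forget q (dblx q x) @ forget (trk q (dblx q x)) (dbl (trk1 q x) w)"
    by (simp only: dbl.simps forget_append)
  also have "\<dots> = x # w" unfolding a b by simp
  finally have f: "forget q (dbl q (x # w)) = x # w" .
  have "trk q (dbl q (x # w)) = trk (trk q (dblx q x)) (dbl (trk1 q x) w)"
    by (simp only: dbl.simps trk_append)
  also have "\<dots> = trk q (x # w)" unfolding a b trk_Cons1 ..
  finally show ?case using f by simp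
qed

lemma dblx_emb: "1 \<le> q \<Longrightarrow> x \<in> UNIV \<times> braid_gens g m \<Longrightarrow>
   trk (emb q t) (dblx q x) = emb (trk1 q x) (trk1 t x) \<and>
   strand (emb q t) (dblx q x) = strand t [x] \<and> strand q (dblx q x) = strand q [x]"
  by (drule valid_letter) (auto simp: dblx_def trk1_def emb_def swp_def strand_append strand_Wk strand_invWk sw_def swi_def split: if_splits)

lemma dbl_emb: "1 \<le> q \<Longrightarrow> w \<in> lists (UNIV \<times> braid_gens g m) \<Longrightarrow>
   trk (emb q t) (dbl q w) = emb (trk q w) (trk t w) \<and>
   strand (emb q t) (dbl q w) = strand t w \<and> strand q (dbl q w) = strand q w"
proof (induction w arbitrary: q t)
  case Nil then show ?case by simp
next
  case (Cons x w)
  have x: "x \<in> UNIV \<times> braid_gens g m" and w: "w \<in> lists (UNIV \<times> braid_gens g m)" using Cons.prems by auto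
  have q1: "1 \<le> trk1 q x" using valid_letter[OF x] Cons.prems(1) by (auto simp: swp_def trk1_def)
  have tq: "trk q (dblx q x) = trk1 q x" using dblx_forget[OF Cons.prems(1) x] by simp
  have e: "trk (emb q t) (dblx q x) = emb (trk1 q x) (trk1 t x)" "strand (emb q t) (dblx q x) = strand t [x]"
     "strand q (dblx q x) = strand q [x]" using dblx_emb[OF Cons.prems(1) x] by auto
  have IH1: "trk (emb (trk1 q x) (trk1 t x)) (dbl (trk1 q x) w) = emb (trk (trk1 q x) w) (trk (trk1 t x) w)"
    "strand (emb (trk1 q x) (trk1 t x)) (dbl (trk1 q x) w) = strand (trk1 t x) w"
    using Cons.IH[OF q1 w, of "trk1 t x"] by auto
  have IH2: "strand (trk1 q x) (dbl (trk1 q x) w) = strand (trk1 q x) w"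
    using Cons.IH[OF q1 w] by auto
  have r1: "trk (emb q t) (dbl q (x # w)) = emb (trk q (x # w)) (trk t (x # w))"
  proof -
    have "trk (emb q t) (dbl q (x # w)) = trk (trk (emb q t) (dblx q x)) (dbl (trk1 q x) w)"
      by (simp only: dbl.simps trk_append)
    also have "\<dots> = emb (trk q (x # w)) (trk t (x # w))" unfolding e(1) IH1(1) trk_Cons1 ..
    finally show ?thesis .
  qed
  have r2: "strand (emb q t) (dbl q (x # w)) = strand t (x # w)"
  proof -
    have "strand (emb q t) (dbl q (x # w)) = strand (emb q t) (dblx q x) @ strand (trk (emb q t) (dblx q x)) (dbl (trk1 q x) w)"
      by (simp only: dbl.simps strand_append)
    also have "\<dots> = strand t (x # w)" unfolding e(1) e(2) IH1(2) strand_Cons1[of t x w] ..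
    finally show ?thesis .
  qed
  have r3: "strand q (dbl q (x # w)) = strand q (x # w)"
  proof -
    have "strand q (dbl q (x # w)) = strand q (dblx q x) @ strand (trk q (dblx q x)) (dbl (trk1 q x) w)"
      by (simp only: dbl.simps strand_append)
    also have "\<dots> = strand q (x # w)" unfolding e(3) tq IH2 strand_Cons1[of q x w] ..
    finally show ?thesis .
  qed
  show ?case using r1 r2 r3 by blast
qed

lemma dbl_pure: "1 \<le> q \<Longrightarrow> w \<in> lists (UNIV \<times> braid_gens g m) \<Longrightarrow> perm_word w = id \<Longrightarrow> perm_word (dbl q w) = id"
proof -
  assume q: "1 \<le> q" and w: "w \<in> lists (UNIV \<times> braid_gens g m)" and p: "perm_word w = id"
  have tw: "\<And>p. trk p w = p" using p pure_iff by blast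
  have "trk p (dbl q w) = p" for p
  proof (cases "p = q")
    case True
    then show ?thesis using dbl_forget[OF q w] tw by simp
  next
    case False
    define t where "t = (if p < q then p else p - 1)"
    have "emb q t = p" using False by (auto simp: t_def emb_def)
    then show ?thesis using dbl_emb[OF q w, of t] tw by simp
  qed
  then show ?thesis using pure_iff by blast
qed

lemma bwords_Cons: "x # w \<in> bwords g n \<longleftrightarrow> x \<in> UNIV \<times> braid_gens g n \<and> w \<in> bwords g n"
  by (simp add: bwords_def)

lemma dblx_valid: "2 \<le> n \<Longrightarrow> 1 \<le> q \<Longrightarrow> q \<le> n - 1 \<Longrightarrow> x \<in> UNIV \<times> braid_gens g (n - 1) \<Longrightarrow> dblx q x \<in> bwords g n"
proof -
  assume n: "2 \<le> n" and q: "1 \<le> q" "q \<le> n - 1" and x: "x \<in> UNIV \<times> braid_gens g (n - 1)"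
  from valid_letter[OF x] show ?thesis
  proof (elim disjE exE conjE)
    fix b i assume xi: "x = (b, Sg i)" "1 \<le> i" "i \<le> n - 1 - 1"
    show ?thesis unfolding xi dblx_def using n q xi(2,3)
      by (auto simp: bwords_Cons)
  next
    fix b k assume xk: "x = (b, Ag k)" "1 \<le> k" "k \<le> 2*g"
    show ?thesis unfolding xk dblx_def using n q xk(2,3)
      by (simp add: bwords_Cons bwords_Wk)
  qed
qed

lemma dbl_valid: "2 \<le> n \<Longrightarrow> 1 \<le> q \<Longrightarrow> q \<le> n - 1 \<Longrightarrow> w \<in> bwords g (n - 1) \<Longrightarrow> dbl q w \<in> bwords g n"
proof (induction w arbitrary: q)
  case Nil then show ?case by (simp only: dbl.simps bwords_Nil)
next
  case (Cons x w)
  have x: "x \<in> UNIV \<times> braid_gens g (n - 1)" and w: "w \<in> bwords g (n - 1)" using Cons.prems(4) unfolding bwords_Cons by auto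
  have q1: "trk1 q x \<in> {1..n-1}"
    using valid_letter[OF x] Cons.prems(2,3) by (auto simp: trk1_def swp_def)
  have a: "dblx q x \<in> bwords g n" by (rule dblx_valid[OF Cons.prems(1,2,3) x])
  have b: "dbl (trk1 q x) w \<in> bwords g n" using Cons.IH[OF Cons.prems(1) _ _ w] q1 by auto
  show ?case using a b by (simp only: dbl.simps bwords_append)
qed


definition Tq :: "nat \<Rightarrow> bgen word" where "Tq q = sw q @ sw q"

lemma B_split: "bcl g n (a @ b) = bcl g n a \<otimes>\<^bsub>Bgrp g n\<^esub> bcl g n b"
  by (simp add: B_mult)

lemma B_ctx: "bcl g n a = bcl g n b \<Longrightarrow> bcl g n (u @ a @ v) = bcl g n (u @ b @ v)"
  by (simp add: pclass_eq_iff pe_ctx)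

lemma BR1: "1 \<le> i \<Longrightarrow> i + 1 \<le> n - 1 \<Longrightarrow>
   bcl g n (sw (i+1) @ sw i @ Tq (i+1)) = bcl g n (Tq i @ sw (i+1) @ sw i)"
proof -
  assume i: "1 \<le> i" "i + 1 \<le> n - 1"
  have r: "bcl g n (sw i @ sw (i+1) @ sw i) = bcl g n (sw (i+1) @ sw i @ sw (i+1))"
    by (rule B_rel, rule rel_braid) (use i in auto)
  have "bcl g n (sw (i+1) @ sw i @ Tq (i+1)) = bcl g n ([] @ (sw (i+1) @ sw i @ sw (i+1)) @ sw (i+1))"
    by (simp add: Tq_def)
  also have "\<dots> = bcl g n ([] @ (sw i @ sw (i+1) @ sw i) @ sw (i+1))"
    using B_ctx[OF r[symmetric]] by blast
  also have "\<dots> = bcl g n (sw i @ (sw (i+1) @ sw i @ sw (i+1)) @ [])" by simp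
  also have "\<dots> = bcl g n (sw i @ (sw i @ sw (i+1) @ sw i) @ [])"
    using B_ctx[OF r[symmetric]] by blast
  also have "\<dots> = bcl g n (Tq i @ sw (i+1) @ sw i)" by (simp add: Tq_def)
  finally show ?thesis .
qed

lemma BR2: "1 \<le> i \<Longrightarrow> i + 1 \<le> n - 1 \<Longrightarrow>
   bcl g n (sw i @ sw (i+1) @ Tq i) = bcl g n (Tq (i+1) @ sw i @ sw (i+1))"
proof -
  assume i: "1 \<le> i" "i + 1 \<le> n - 1"
  have r: "bcl g n (sw i @ sw (i+1) @ sw i) = bcl g n (sw (i+1) @ sw i @ sw (i+1))"
    by (rule B_rel, rule rel_braid) (use i in auto)
  have "bcl g n (sw i @ sw (i+1) @ Tq i) = bcl g n ([] @ (sw i @ sw (i+1) @ sw i) @ sw i)"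
    by (simp add: Tq_def)
  also have "\<dots> = bcl g n ([] @ (sw (i+1) @ sw i @ sw (i+1)) @ sw i)"
    using B_ctx[OF r] by blast
  also have "\<dots> = bcl g n (sw (i+1) @ (sw i @ sw (i+1) @ sw i) @ [])" by simp
  also have "\<dots> = bcl g n (sw (i+1) @ (sw (i+1) @ sw i @ sw (i+1)) @ [])"
    using B_ctx[OF r] by blast
  also have "\<dots> = bcl g n (Tq (i+1) @ sw i @ sw (i+1))" by (simp add: Tq_def)
  finally show ?thesis .
qed

lemma B_comm_sq:
  assumes u: "u \<in> bwords g n" and v: "v \<in> bwords g n" and c: "bcl g n (u @ v) = bcl g n (v @ u)"
  shows "bcl g n (u @ v @ v) = bcl g n (v @ v @ u) \<and> bcl g n (inv_word u @ v @ v) = bcl g n (v @ v @ inv_word u)"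
proof -
  interpret G: group "Bgrp g n" by (rule Bgrp_group)
  have uc: "bcl g n u \<in> carrier (Bgrp g n)" and vc: "bcl g n v \<in> carrier (Bgrp g n)" using u v by (auto intro: B_in)
  have c': "bcl g n u \<otimes>\<^bsub>Bgrp g n\<^esub> bcl g n v = bcl g n v \<otimes>\<^bsub>Bgrp g n\<^esub> bcl g n u" using c by (simp add: B_mult)
  have vv: "bcl g n (v @ v) \<in> carrier (Bgrp g n)" using v by (auto intro: B_in)
  have c2: "bcl g n u \<otimes>\<^bsub>Bgrp g n\<^esub> bcl g n (v @ v) = bcl g n (v @ v) \<otimes>\<^bsub>Bgrp g n\<^esub> bcl g n u"
    using c' uc vc by (simp add: B_split G.m_assoc[symmetric]) (simp add: G.m_assoc)
  have c3: "inv\<^bsub>Bgrp g n\<^esub> (bcl g n u) \<otimes>\<^bsub>Bgrp g n\<^esub> bcl g n (v @ v) = bcl g n (v @ v) \<otimes>\<^bsub>Bgrp g n\<^esub> inv\<^bsub>Bgrp g n\<^esub> (bcl g n u)"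
    by (rule G.comm_inv[OF uc vv c2])
  show ?thesis using c2 c3 u by (simp add: B_mult B_inv)
qed

lemma inv_word_sw2: "inv_word (sw a @ sw b) = swi b @ swi a" by (simp add: sw_def swi_def)

lemma dblx_comm:
  assumes n: "2 \<le> n" and q: "1 \<le> q" "q \<le> n - 1" and x: "x \<in> UNIV \<times> braid_gens g (n - 1)"
  shows "bcl g n (dblx q x @ Tq (trk1 q x)) = bcl g n (Tq q @ dblx q x)"
proof -
  interpret G: group "Bgrp g n" by (rule Bgrp_group)
  from valid_letter[OF x] show ?thesis
  proof (elim disjE exE conjE)
    fix b i assume xi: "x = (b, Sg i)" "1 \<le> i" "i \<le> n - 1 - 1"
    consider "i + 1 < q" | "q < i" | "i = q" | "i + 1 = q" by linarith
    then show ?thesis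
    proof cases
      case 1
      have c: "bcl g n (sw i @ sw q) = bcl g n (sw q @ sw i)" by (rule B_rel, rule rel_far) (use 1 xi q in auto)
      have cs: "bcl g n (sw i @ sw q @ sw q) = bcl g n (sw q @ sw q @ sw i) \<and> bcl g n (inv_word (sw i) @ sw q @ sw q) = bcl g n (sw q @ sw q @ inv_word (sw i))"
        by (rule B_comm_sq[OF _ _ c]) (use xi q in auto)
      have t: "trk1 q x = q" using 1 xi by (simp add: trk1_def swp_def)
      show ?thesis using cs 1 xi unfolding t by (cases b) (auto simp: dblx_def Tq_def sw_def swi_def)
    next
      case 2
      have c: "bcl g n (sw (i+1) @ sw q) = bcl g n (sw q @ sw (i+1))" by (rule B_rel, rule rel_far) (use 2 xi q in auto)
      have cs: "bcl g n (sw (i+1) @ sw q @ sw q) = bcl g n (sw q @ sw q @ sw (i+1)) \<and> bcl g n (inv_word (sw (i+1)) @ sw q @ sw q) = bcl g n (sw q @ sw q @ inv_word (sw (i+1)))"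
        by (rule B_comm_sq[OF _ _ c]) (use xi q in auto)
      have t: "trk1 q x = q" using 2 xi by (simp add: trk1_def swp_def)
      show ?thesis using cs 2 xi unfolding t by (cases b) (auto simp: dblx_def Tq_def sw_def swi_def)
    next
      case 3
      have t: "trk1 q x = q + 1" using 3 xi by (simp add: trk1_def swp_def)
      show ?thesis
      proof (cases b)
        case True
        then show ?thesis using BR1[of q n g] 3 xi unfolding t by (simp add: dblx_def)
      next
        case False
        let ?Z = "sw q @ sw (q+1)"
        have zc: "bcl g n ?Z \<in> carrier (Bgrp g n)" using 3 xi by (intro B_in) auto
        have t1: "bcl g n (Tq q) \<in> carrier (Bgrp g n)" "bcl g n (Tq (q+1)) \<in> carrier (Bgrp g n)"
          using 3 xi q by (auto intro!: B_in simp: Tq_def)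
        have br: "bcl g n ?Z \<otimes>\<^bsub>Bgrp g n\<^esub> bcl g n (Tq q) = bcl g n (Tq (q+1)) \<otimes>\<^bsub>Bgrp g n\<^esub> bcl g n ?Z"
          using BR2[of q n g] 3 xi by (simp add: B_mult)
        have "inv\<^bsub>Bgrp g n\<^esub> (bcl g n ?Z) \<otimes>\<^bsub>Bgrp g n\<^esub> bcl g n (Tq (q+1)) = bcl g n (Tq q) \<otimes>\<^bsub>Bgrp g n\<^esub> inv\<^bsub>Bgrp g n\<^esub> (bcl g n ?Z)"
          by (rule G.conj_inv[OF zc t1(2) t1(1) br])
        moreover have "inv\<^bsub>Bgrp g n\<^esub> (bcl g n ?Z) = bcl g n (swi (q+1) @ swi q)"
          using 3 xi by (subst B_inv) (auto simp: inv_word_sw2 inv_sw)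
        ultimately show ?thesis using False 3 xi unfolding t by (simp add: dblx_def B_mult)
      qed
    next
      case 4
      have t: "trk1 q x = i" using 4 xi by (simp add: trk1_def swp_def)
      show ?thesis
      proof (cases b)
        case True
        then show ?thesis using BR2[of i n g] 4 xi q unfolding t by (simp add: dblx_def)
      next
        case False
        let ?Z = "sw (i+1) @ sw i"
        have zc: "bcl g n ?Z \<in> carrier (Bgrp g n)" using 4 xi q by (intro B_in) auto
        have t1: "bcl g n (Tq i) \<in> carrier (Bgrp g n)" "bcl g n (Tq (i+1)) \<in> carrier (Bgrp g n)"
          using 4 xi q by (auto intro!: B_in simp: Tq_def)
        have br: "bcl g n ?Z \<otimes>\<^bsub>Bgrp g n\<^esub> bcl g n (Tq (i+1)) = bcl g n (Tq i) \<otimes>\<^bsub>Bgrp g n\<^esub> bcl g n ?Z"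
          using BR1[of i n g] 4 xi q by (simp add: B_mult)
        have "inv\<^bsub>Bgrp g n\<^esub> (bcl g n ?Z) \<otimes>\<^bsub>Bgrp g n\<^esub> bcl g n (Tq i) = bcl g n (Tq (i+1)) \<otimes>\<^bsub>Bgrp g n\<^esub> inv\<^bsub>Bgrp g n\<^esub> (bcl g n ?Z)"
          by (rule G.conj_inv[OF zc t1(1) t1(2) br])
        moreover have "inv\<^bsub>Bgrp g n\<^esub> (bcl g n ?Z) = bcl g n (swi i @ swi (i+1))"
          using 4 xi q by (subst B_inv) (auto simp: inv_word_sw2 inv_sw)
        ultimately show ?thesis using False 4 xi unfolding t by (simp add: dblx_def B_mult)
      qed
    qed
  next
    fix b k assume xk: "x = (b, Ag k)" "1 \<le> k" "k \<le> 2*g"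
    have t: "trk1 q x = q" using xk by (simp add: trk1_def)
    show ?thesis
    proof (cases "q = 1")
      case True
      have cs: "bcl g n (Wk k @ sw 1 @ sw 1) = bcl g n (sw 1 @ sw 1 @ Wk k) \<and> bcl g n (inv_word (Wk k) @ sw 1 @ sw 1) = bcl g n (sw 1 @ sw 1 @ inv_word (Wk k))"
        by (rule B_comm_sq[OF _ _ Wk_comm]) (use xk n in \<open>auto intro: bwords_Wk\<close>)
      show ?thesis using cs True xk unfolding t by (cases b) (auto simp: dblx_def Tq_def)
    next
      case False
      have c: "bcl g n (aw k @ sw q) = bcl g n (sw q @ aw k)" by (rule B_rel, rule rel_as) (use False xk q in auto)
      have cs: "bcl g n (aw k @ sw q @ sw q) = bcl g n (sw q @ sw q @ aw k) \<and> bcl g n (inv_word (aw k) @ sw q @ sw q) = bcl g n (sw q @ sw q @ inv_word (aw k))"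
        by (rule B_comm_sq[OF _ _ c]) (use xk q in auto)
      show ?thesis using cs False xk unfolding t by (cases b) (auto simp: dblx_def Tq_def aw_def)
    qed
  qed
qed

lemma dbl_comm:
  assumes n: "2 \<le> n"
  shows "1 \<le> q \<Longrightarrow> q \<le> n - 1 \<Longrightarrow> w \<in> bwords g (n - 1) \<Longrightarrow>
    bcl g n (dbl q w @ Tq (trk q w)) = bcl g n (Tq q @ dbl q w)"
proof (induction w arbitrary: q)
  case Nil then show ?case by simp
next
  case (Cons x w)
  have x: "x \<in> UNIV \<times> braid_gens g (n - 1)" and w: "w \<in> bwords g (n - 1)" using Cons.prems(3) unfolding bwords_Cons by auto
  have q1: "trk1 q x \<in> {1..n-1}"
    using valid_letter[OF x] Cons.prems(1,2) by (auto simp: trk1_def swp_def)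
  have IH: "bcl g n (dbl (trk1 q x) w @ Tq (trk (trk1 q x) w)) = bcl g n (Tq (trk1 q x) @ dbl (trk1 q x) w)"
    using Cons.IH[OF _ _ w] q1 by auto
  have L: "bcl g n (dblx q x @ Tq (trk1 q x)) = bcl g n (Tq q @ dblx q x)"
    by (rule dblx_comm[OF n Cons.prems(1,2) x])
  have "bcl g n (dbl q (x # w) @ Tq (trk q (x # w))) = bcl g n (dblx q x) \<otimes>\<^bsub>Bgrp g n\<^esub> bcl g n (dbl (trk1 q x) w @ Tq (trk (trk1 q x) w))"
    by (simp add: trk_Cons1 B_mult)
  also have "\<dots> = bcl g n (dblx q x @ Tq (trk1 q x)) \<otimes>\<^bsub>Bgrp g n\<^esub> bcl g n (dbl (trk1 q x) w)"
    unfolding IH by (simp add: B_mult)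
  also have "\<dots> = bcl g n (Tq q @ dbl q (x # w))"
    unfolding L by (simp add: B_mult)
  finally show ?case .
qed


lemma pi1_one: "\<one>\<^bsub>pi1 g\<^esub> = pclass (pi_rels g) []"
  by (simp add: pi1_def pres_one)

lemma Kgrp_carrier: "carrier (Kgrp g n) = K g n" by (simp add: Kgrp_def)
lemma Kgrp_mult: "mult (Kgrp g n) = mult (Bgrp g n)" by (simp add: Kgrp_def)

lemma K_elim:
  assumes "c \<in> K g n"
  obtains w where "w \<in> bwords g n" "c = bcl g n w" "perm_word w = id"
    "\<And>s. s \<in> {1..n} \<Longrightarrow> pres_eq (pi_rels g) (strand s w) []"
proof -
  from assms obtain w where w: "w \<in> bwords g n" "c = bcl g n w" "perm_word w = id"
    by (auto simp: K_def PB_def)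
  have "pres_eq (pi_rels g) (strand s w) []" if s: "s \<in> {1..n}" for s
  proof -
    have "phi g n c s = \<one>\<^bsub>pi1 g\<^esub>" using assms s by (auto simp: K_def)
    then have "pclass (pi_rels g) (strand s w) = pclass (pi_rels g) []"
      using phi_cls[OF w(1) s] w(2) by (simp add: pi1_one)
    then show ?thesis by (simp add: pclass_eq_iff)
  qed
  then show ?thesis using that w by blast
qed

lemma K_intro:
  assumes "w \<in> bwords g n" "perm_word w = id" "\<And>s. s \<in> {1..n} \<Longrightarrow> pres_eq (pi_rels g) (strand s w) []"
  shows "bcl g n w \<in> K g n"
proof -
  have "bcl g n w \<in> PB g n" using assms(1,2) by (auto simp: PB_def)
  moreover have "\<forall>s\<in>{1..n}. phi g n (bcl g n w) s = \<one>\<^bsub>pi1 g\<^esub>"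
    using assms(3) phi_cls[OF assms(1)] by (simp add: pi1_one pclass_eq_iff)
  ultimately show ?thesis by (simp add: K_def)
qed

lemma pe_inv_triv: "pres_eq R b [] \<Longrightarrow> pres_eq R (inv_word b) []"
proof -
  assume h: "pres_eq R b []"
  have "pres_eq R (inv_word b @ [] @ []) (inv_word b @ b @ [])"
    by (rule pe_ctx[OF pres_eq.sym[OF h]])
  then have "pres_eq R (inv_word b) (inv_word b @ b)" by simp
  then show ?thesis using pe_inv_l by (blast intro: pres_eq.trans)
qed

lemma pe_conj_triv: "pres_eq R m [] \<Longrightarrow> pres_eq R (a @ m @ inv_word a) []"
proof -
  assume h: "pres_eq R m []"
  have "pres_eq R (a @ m @ inv_word a) (a @ [] @ inv_word a)" by (rule pe_ctx[OF h])
  then show ?thesis using pe_inv_r[of R a] by (auto intro: pres_eq.trans)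
qed

lemma pe_app_triv: "pres_eq R a [] \<Longrightarrow> pres_eq R b [] \<Longrightarrow> pres_eq R (a @ b) []"
  using pe_app[of R a "[]" b "[]"] by simp

lemma strand_conj: "perm_word m = id \<Longrightarrow>
  strand s (a @ m @ inv_word a) = strand s a @ strand (trk s a) m @ inv_word (strand s a)"
proof -
  assume p: "perm_word m = id"
  have t: "trk (trk s a) m = trk s a" using p pure_iff by blast
  show ?thesis using strand_inv[of s a] by (simp add: strand_append t)
qed

lemma inv_prodw_sw: "inv_word (prodw sw xs) = prodw swi (rev xs)"
  by (induction xs) (auto simp: sw_def swi_def)

lemma lift1_valid: "v \<in> lists (UNIV \<times> {1..2*g}) \<Longrightarrow> lift1 v \<in> bwords g n"
  by (induction v) (auto simp: lift1_def bwords_def)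

lemma lift1_forget: "forget 1 (lift1 v) = [] \<and> trk p (lift1 v) = p"
  by (induction v) (auto simp: lift1_def)

lemma U_valid: "j \<le> n \<Longrightarrow> U 1 (j - 1) \<in> bwords g n"
proof (induction j)
  case 0 then show ?case by simp
next
  case (Suc j) then show ?case by (cases j) auto
qed


theorem proposition2p3:
  fixes g n j :: nat
    and \<iota> :: "bgen word set \<Rightarrow> bgen word set"
    and ch :: "nat word set \<Rightarrow> nat word"
    and u \<beta> :: "bgen word set"
  assumes "1 \<le> g" and "2 \<le> n"
    and "\<iota> \<in> hom (Kgrp g (n - 1)) (Kgrp g n)"
    and "\<forall>b\<in>K g (n - 1). rho g n (\<iota> b) = b"
    and "transversal g ch"
    and "j \<in> {2..n}" and "u \<in> Bset g n ch j"
    and "\<beta> \<in> K g (n - 1)"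
  shows "\<exists>\<omega>\<in>F g n. \<iota> \<beta> \<otimes>\<^bsub>Bgrp g n\<^esub> u \<otimes>\<^bsub>Bgrp g n\<^esub> inv\<^bsub>Bgrp g n\<^esub> (\<iota> \<beta>)
                   = \<omega> \<otimes>\<^bsub>Bgrp g n\<^esub> u \<otimes>\<^bsub>Bgrp g n\<^esub> inv\<^bsub>Bgrp g n\<^esub> \<omega>"
proof -
  interpret G: group "Bgrp g n" by (rule Bgrp_group)
  interpret H: group "Bgrp g (n - 1)" by (rule Bgrp_group)
  have n: "2 \<le> n" by fact
  from assms(7) obtain \<gamma> where \<gamma>: "\<gamma> \<in> carrier (pi1 g)"
    and u: "u = bcl g n (lift1 (ch \<gamma>) @ Tw 1 j @ inv_word (lift1 (ch \<gamma>)))"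
    by (auto simp: Bset_def)
  define L where "L = lift1 (ch \<gamma>)"
  have chv: "ch \<gamma> \<in> lists (UNIV \<times> {1..2*g})" using assms(5) \<gamma> by (auto simp: transversal_def)
  have Lv: "L \<in> bwords g n" unfolding L_def by (rule lift1_valid[OF chv])
  define q where "q = j - 1"
  have q: "1 \<le> q" "q \<le> n - 1" using assms(6) by (auto simp: q_def)
  define \<delta> where "\<delta> = U 1 q"
  have \<delta>v: "\<delta> \<in> bwords g n" unfolding \<delta>_def q_def by (rule U_valid) (use assms(6) in auto)
  define X where "X = L @ \<delta>"
  have Xv: "X \<in> bwords g n" using Lv \<delta>v by (simp add: X_def)
  have uX: "u = bcl g n (X @ Tq q @ inv_word X)"
    by (simp add: u L_def X_def Tw_def Tq_def inv_prodw_sw q_def \<delta>_def)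
  obtain w where w: "w \<in> bwords g (n - 1)" "\<beta> = bcl g (n - 1) w" "perm_word w = id"
    "\<And>s. s \<in> {1..n-1} \<Longrightarrow> pres_eq (pi_rels g) (strand s w) []"
    using K_elim[OF assms(8)] by blast
  have wl: "w \<in> lists (UNIV \<times> braid_gens g (n - 1))" using w(1) by (simp add: bwords_def)
  have tw: "\<And>p. trk p w = p" using w(3) pure_iff by blast
  define D where "D = dbl q w"
  have Dv: "D \<in> bwords g n" unfolding D_def by (rule dbl_valid[OF n q w(1)])
  have Dp: "perm_word D = id" unfolding D_def by (rule dbl_pure[OF q(1) wl w(3)])
  have Ds: "pres_eq (pi_rels g) (strand t D) []" if t: "t \<in> {1..n}" for t
  proof (cases "t = q")
    case True
    then show ?thesis using dbl_emb[OF q(1) wl] w(4)[of q] q unfolding D_def by auto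
  next
    case False
    define t' where "t' = (if t < q then t else t - 1)"
    have e: "emb q t' = t" using False by (auto simp: t'_def emb_def)
    have t': "t' \<in> {1..n-1}" using t q False by (auto simp: t'_def)
    show ?thesis using dbl_emb[OF q(1) wl, of t'] w(4)[OF t'] unfolding D_def e by auto
  qed
  define cw where "cw = X @ D @ inv_word X"
  have cwv: "cw \<in> bwords g n" using Xv Dv by (simp add: cw_def)
  have cwp: "perm_word cw = id" unfolding cw_def by (rule pure_conj[OF Dp])
  have cws: "pres_eq (pi_rels g) (strand s cw) []" if s: "s \<in> {1..n}" for s
  proof -
    have "trk s X \<in> {1..n}" using trk_range[of X g n s] Xv s by (simp add: bwords_def)
    then show ?thesis unfolding cw_def strand_conj[OF Dp] by (intro pe_conj_triv Ds)
  qed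
  define c where "c = bcl g n cw"
  have cK: "c \<in> K g n" unfolding c_def by (rule K_intro[OF cwv cwp cws])
  have fX: "forget 1 X = []" "trk 1 X = q"
    using lift1_forget[of "ch \<gamma>" 1] q
    by (simp_all add: X_def L_def \<delta>_def forget_append forget_U trk_U)
  have fD: "forget q D = w" "trk q D = q" using dbl_forget[OF q(1) wl] tw by (auto simp: D_def)
  have fcw: "forget 1 cw = w"
  proof -
    have "forget q (inv_word X) = []" using forget_inv[of 1 X] fX by simp
    then show ?thesis unfolding cw_def forget_append fX fD by simp
  qed
  have tcw: "trk p cw = p" for p using cwp pure_iff by blast
  have xc: "bcl g n X \<in> carrier (Bgrp g n)" using Xv by (rule B_in)
  have dc: "bcl g n D \<in> carrier (Bgrp g n)" using Dv by (rule B_in)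
  have tc: "bcl g n (Tq q) \<in> carrier (Bgrp g n)" using q by (auto intro!: B_in simp: Tq_def)
  have ix: "inv\<^bsub>Bgrp g n\<^esub> (bcl g n X) = bcl g n (inv_word X)" using Xv by (rule B_inv)
  have dt: "bcl g n D \<otimes>\<^bsub>Bgrp g n\<^esub> bcl g n (Tq q) = bcl g n (Tq q) \<otimes>\<^bsub>Bgrp g n\<^esub> bcl g n D"
    using dbl_comm[OF n q w(1)] tw by (simp add: D_def B_mult)
  have ce: "c = bcl g n X \<otimes>\<^bsub>Bgrp g n\<^esub> bcl g n D \<otimes>\<^bsub>Bgrp g n\<^esub> inv\<^bsub>Bgrp g n\<^esub> (bcl g n X)"
    by (simp add: c_def cw_def ix B_mult)
  have ue: "u = bcl g n X \<otimes>\<^bsub>Bgrp g n\<^esub> bcl g n (Tq q) \<otimes>\<^bsub>Bgrp g n\<^esub> inv\<^bsub>Bgrp g n\<^esub> (bcl g n X)"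
    by (simp add: uX ix B_mult)
  have cc: "c \<in> carrier (Bgrp g n)" using cwv by (simp add: c_def B_in)
  have uc: "u \<in> carrier (Bgrp g n)" using ue xc tc by simp
  have cu: "c \<otimes>\<^bsub>Bgrp g n\<^esub> u = u \<otimes>\<^bsub>Bgrp g n\<^esub> c"
  proof -
    have "c \<otimes>\<^bsub>Bgrp g n\<^esub> u = bcl g n X \<otimes>\<^bsub>Bgrp g n\<^esub> (bcl g n D \<otimes>\<^bsub>Bgrp g n\<^esub> bcl g n (Tq q)) \<otimes>\<^bsub>Bgrp g n\<^esub> inv\<^bsub>Bgrp g n\<^esub> (bcl g n X)"
      unfolding ce ue using xc dc tc by (simp add: G.gsimps)
    also have "\<dots> = bcl g n X \<otimes>\<^bsub>Bgrp g n\<^esub> (bcl g n (Tq q) \<otimes>\<^bsub>Bgrp g n\<^esub> bcl g n D) \<otimes>\<^bsub>Bgrp g n\<^esub> inv\<^bsub>Bgrp g n\<^esub> (bcl g n X)"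
      unfolding dt ..
    also have "\<dots> = u \<otimes>\<^bsub>Bgrp g n\<^esub> c"
      unfolding ce ue using xc dc tc by (simp add: G.gsimps)
    finally show ?thesis .
  qed
  have iK: "\<iota> \<beta> \<in> K g n" using assms(3,8) by (auto simp: hom_def Kgrp_carrier)
  obtain v where v: "v \<in> bwords g n" "\<iota> \<beta> = bcl g n v" "perm_word v = id"
    "\<And>s. s \<in> {1..n} \<Longrightarrow> pres_eq (pi_rels g) (strand s v) []"
    using K_elim[OF iK] by blast
  have tv: "trk p v = p" for p using v(3) pure_iff by blast
  have rv: "bcl g (n - 1) (forget 1 v) = \<beta>"
    using assms(4) assms(8) rho_cls[OF v(1) n] v(2) by auto
  define \<omega> where "\<omega> = \<iota> \<beta> \<otimes>\<^bsub>Bgrp g n\<^esub> inv\<^bsub>Bgrp g n\<^esub> c"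
  have \<omega>e: "\<omega> = bcl g n (v @ inv_word cw)"
    by (simp add: \<omega>_def v(2) c_def B_inv[OF cwv] B_mult)
  have \<omega>K: "\<omega> \<in> K g n"
    unfolding \<omega>e
  proof (rule K_intro)
    show "v @ inv_word cw \<in> bwords g n" using v(1) cwv by simp
    show "perm_word (v @ inv_word cw) = id" by (rule pure_append[OF v(3) pure_inv[OF cwp]])
    fix s assume s: "s \<in> {1..n}"
    have "strand s (inv_word cw) = inv_word (strand s cw)" using strand_inv[of s cw] tcw by simp
    then have "strand s (v @ inv_word cw) = strand s v @ inv_word (strand s cw)"
      by (simp add: strand_append tv)
    then show "pres_eq (pi_rels g) (strand s (v @ inv_word cw)) []"
      using pe_app_triv[OF v(4)[OF s] pe_inv_triv[OF cws[OF s]]] by simp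
  qed
  have \<omega>r: "rho g n \<omega> = \<one>\<^bsub>Bgrp g (n - 1)\<^esub>"
  proof -
    have vw: "v @ inv_word cw \<in> bwords g n" using v(1) cwv by simp
    have f1: "forget 1 (inv_word cw) = inv_word w" using forget_inv[of 1 cw] tcw fcw by simp
    have "rho g n \<omega> = bcl g (n - 1) (forget 1 v @ inv_word w)"
      unfolding \<omega>e rho_cls[OF vw n] forget_append tv f1 ..
    also have "\<dots> = bcl g (n - 1) (forget 1 v) \<otimes>\<^bsub>Bgrp g (n - 1)\<^esub> bcl g (n - 1) (inv_word w)"
      by (simp add: B_mult)
    also have "\<dots> = bcl g (n - 1) (w @ inv_word w)" unfolding rv w(2) by (simp add: B_mult)
    also have "\<dots> = \<one>\<^bsub>Bgrp g (n - 1)\<^esub>" by (simp add: B_one pclass_eq_iff pe_inv_r)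
    finally show ?thesis .
  qed
  have \<omega>F: "\<omega> \<in> F g n" using \<omega>K \<omega>r by (simp add: F_def)
  have ic: "\<iota> \<beta> \<in> carrier (Bgrp g n)" using v by (simp add: B_in)
  have key: "inv\<^bsub>Bgrp g n\<^esub> c \<otimes>\<^bsub>Bgrp g n\<^esub> (u \<otimes>\<^bsub>Bgrp g n\<^esub> c) = u"
    using cu[symmetric] cc uc by (simp add: G.gsimps)
  have "\<omega> \<otimes>\<^bsub>Bgrp g n\<^esub> u \<otimes>\<^bsub>Bgrp g n\<^esub> inv\<^bsub>Bgrp g n\<^esub> \<omega>
      = \<iota> \<beta> \<otimes>\<^bsub>Bgrp g n\<^esub> (inv\<^bsub>Bgrp g n\<^esub> c \<otimes>\<^bsub>Bgrp g n\<^esub> (u \<otimes>\<^bsub>Bgrp g n\<^esub> c)) \<otimes>\<^bsub>Bgrp g n\<^esub> inv\<^bsub>Bgrp g n\<^esub> (\<iota> \<beta>)"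
    unfolding \<omega>_def using ic cc uc by (simp add: G.gsimps)
  also have "\<dots> = \<iota> \<beta> \<otimes>\<^bsub>Bgrp g n\<^esub> u \<otimes>\<^bsub>Bgrp g n\<^esub> inv\<^bsub>Bgrp g n\<^esub> (\<iota> \<beta>)" unfolding key ..
  finally show ?thesis using \<omega>F by metis
qed


end
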